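(* Fix $n\ge1$, positive integers $M_{1,n},M_{2,n}$, random vectors $(\mathbf{X}_1,\mathbf{X}_2)$ in $\mathbb{R}^n\times\mathbb{R}^n$ with joint distribution $P_{\mathbf{X}_1,\mathbf{X}_2}$ such that $\|\mathbf{X}_1\|_2^2\le nS_1$ and $\|\mathbf{X}_2\|_2^2\le nS_2$ almost surely, a conditional density $Q_{\mathbf{Y}|\mathbf{X}_2}$ and a density $Q_{\mathbf{Y}}$ on $\mathbb{R}^n$, and $\gamma>0$. Then there exists an $(n,M_{1,n},M_{2,n},S_1,S_2,\varepsilon_n)$-code with $$\varepsilon_n\le\Pr(\mathcal{F}_n\cup\mathcal{G}_n)+\Lambda_1e^{-n\gamma}+\Lambda_{12}e^{-n\gamma},$$ where $\Lambda_1:=\sup_{\mathbf{x}_2,\mathbf{y}}\frac{(P_{\mathbf{X}_1|\mathbf{X}_2}W^n)(\mathbf{y}|\mathbf{x}_2)}{Q_{\mathbf{Y}|\mathbf{X}_2}(\mathbf{y}|\mathbf{x}_2)}$, $\Lambda_{12}:=\sup_{\mathbf{y}}\frac{(P_{\mathbf{X}_1,\mathbf{X}_2}W^n)(\mathbf{y})}{Q_{\mathbf{Y}}(\mathbf{y})}$ (Radon–Nikodym derivatives), and, with $\mathbf{Y}|\{\mathbf{X}_1=\mathbf{x}_1,\mathbf{X}_2=\mathbf{x}_2\}\sim W^n(\cdot|\mathbf{x}_1,\mathbf{x}_2)$, $\mathcal{F}_n:=\{\frac1n\log\frac{W^n(\mathbf{Y}|\mathbf{X}_1,\mathbf{X}_2)}{Q_{\mathbf{Y}|\mathbf{X}_2}(\mathbf{Y}|\mathbf{X}_2)}\le\frac1n\log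 M_{1,n}+\gamma\}$, $\mathcal{G}_n:=\{\frac1n\log\frac{W^n(\mathbf{Y}|\mathbf{X}_1,\mathbf{X}_2)}{Q_{\mathbf{Y}}(\mathbf{Y})}\le\frac1n\log(M_{1,n}M_{2,n})+\gamma\}$.
   Context: Logarithms natural. Channel $W(y|x_1,x_2)=\frac{1}{\sqrt{2\pi}}\exp(-\frac12(y-x_1-x_2)^2)$, $W^n$ its memoryless $n$-fold extension. $(P_{\mathbf{X}_1|\mathbf{X}_2}W^n)(\mathbf{y}|\mathbf{x}_2):=\int P_{\mathbf{X}_1|\mathbf{X}_2}(d\mathbf{x}_1|\mathbf{x}_2)W^n(\mathbf{y}|\mathbf{x}_1,\mathbf{x}_2)$ and $(P_{\mathbf{X}_1,\mathbf{X}_2}W^n)(\mathbf{y}):=\int W^n(\mathbf{y}|\mathbf{x}_1,\mathbf{x}_2)P_{\mathbf{X}_1,\mathbf{X}_2}(d\mathbf{x}_1,d\mathbf{x}_2)$ are the induced output densities. An $(n,M_{1,n},M_{2,n},S_1,S_2,\varepsilon_n)$-code: encoders $f_{1,n}:[M_{1,n}]\times[M_{2,n}]\to\mathbb{R}^n$, $f_{2,n}:[M_{2,n}]\to\mathbb{R}^n$, decoder $\varphi_n:\mathbb{R}^n\to[M_{1,n}]\times[M_{2,n}]$, with $\|f_{1,n}(m_1,m_2)\|_2^2\le nS_1$, $\|f_{2,n}(m_2)\|_2^2\le nS_2$ and average error probability (uniform independent messages) at most $\varepsilon_n$. *)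

theory Defs
  imports "HOL-Probability.Probability"
begin

text \<open>Vectors in R^n are modelled as real^'n with n = CARD('n).\<close>

definition W :: "real \<Rightarrow> real \<Rightarrow> real \<Rightarrow> real" where
  "W y x1 x2 = (1 / sqrt (2 * pi)) * exp (- ((y - x1 - x2)\<^sup>2) / 2)"

definition Wn :: "real^'n \<Rightarrow> real^'n \<Rightarrow> real^'n \<Rightarrow> real" where
  "Wn y x1 x2 = (\<Prod>i\<in>UNIV. W (y $ i) (x1 $ i) (x2 $ i))"

definition chan :: "real^'n \<Rightarrow> real^'n \<Rightarrow> (real^'n) measure" where
  "chan x1 x2 = density lborel (\<lambda>y. ennreal (Wn y x1 x2))"

text \<open>An (n, M1, M2, S1, S2, eps)-code with n = CARD('n); messages are {..<M}.\<close>
definition is_code ::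
  "nat \<Rightarrow> nat \<Rightarrow> real \<Rightarrow> real \<Rightarrow> real \<Rightarrow>
   (nat \<Rightarrow> nat \<Rightarrow> real^'n) \<Rightarrow> (nat \<Rightarrow> real^'n) \<Rightarrow> (real^'n \<Rightarrow> nat \<times> nat) \<Rightarrow> bool" where
  "is_code M1 M2 S1 S2 eps f1 f2 dec \<longleftrightarrow>
     (\<forall>m1<M1. \<forall>m2<M2. (norm (f1 m1 m2))\<^sup>2 \<le> real CARD('n) * S1) \<and>
     (\<forall>m2<M2. (norm (f2 m2))\<^sup>2 \<le> real CARD('n) * S2) \<and>
     (\<forall>y. dec y \<in> {..<M1} \<times> {..<M2}) \<and>
     dec \<in> measurable borel (count_space UNIV) \<and>
     (1 / (real M1 * real M2)) *
       (\<Sum>m1<M1. \<Sum>m2<M2. measure (chan (f1 m1 m2) (f2 m2)) {y. dec y \<noteq> (m1, m2)}) \<le> eps"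

definition joint_XY :: "((real^'n) \<times> (real^'n)) measure \<Rightarrow> (((real^'n) \<times> (real^'n)) \<times> (real^'n)) measure" where
  "joint_XY P = P \<bind> (\<lambda>x. distr (chan (fst x) (snd x)) borel (\<lambda>y. (x, y)))"

end

theory Submission
  imports Defs
begin


lemma W_eq: "W y a b = normal_density (a+b) 1 y"
  by (simp add: W_def normal_density_def algebra_simps)

lemma W_pos: "W y a b > 0"
  by (simp add: W_def)

lemma W_int: "(\<integral>\<^sup>+ y. ennreal (W y a b) \<partial>lborel) = 1"
proof -
  interpret prob_space "density lborel (normal_density (a+b) 1)"
    by (rule prob_space_normal_density) simp
  have "emeasure (density lborel (normal_density (a+b) 1)) UNIV = 1"
    using emeasure_space_1 by simp
  then show ?thesis by (simp add: emeasure_density W_eq)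
qed

lemma W_meas[measurable]:
  assumes [measurable]: "f \<in> borel_measurable M" "g \<in> borel_measurable M" "h \<in> borel_measurable M"
  shows "(\<lambda>x. W (f x) (g x) (h x)) \<in> borel_measurable M"
  unfolding W_def by measurable

lemma vec_nth_meas[measurable]:
  fixes f :: "'a \<Rightarrow> real^'n"
  shows "f \<in> borel_measurable M \<Longrightarrow> (\<lambda>x. f x $ i) \<in> borel_measurable M"
  by (erule measurable_compose, intro borel_measurable_continuous_onI continuous_intros)

lemma Wn_meas[measurable]:
  fixes f g h :: "'a \<Rightarrow> real^'n"
  assumes [measurable]: "f \<in> borel_measurable M" "g \<in> borel_measurable M" "h \<in> borel_measurable M"
  shows "(\<lambda>x. Wn (f x) (g x) (h x)) \<in> borel_measurable M"
  unfolding Wn_def by measurable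

lemma Basis_vec_real: "(Basis :: (real^'n) set) = (\<lambda>i. axis i 1) ` UNIV"
  by (auto simp: Basis_vec_def)

lemma inj_axis1: "inj (\<lambda>i. axis i (1::real) :: real^'n)"
  by (auto simp: inj_def axis_eq_axis)

lemma Wn_basis: "ennreal (Wn y x1 x2) = (\<Prod>b\<in>Basis. ennreal (W (y \<bullet> b) (x1 \<bullet> b) (x2 \<bullet> b)))"
  unfolding Wn_def Basis_vec_real
  by (subst prod.reindex[OF inj_axis1]) (simp add: prod_ennreal W_pos less_imp_le cart_eq_inner_axis)

lemma Wn_int: "(\<integral>\<^sup>+ y. ennreal (Wn y x1 x2) \<partial>lborel) = 1"
  unfolding Wn_basis
  by (subst nn_integral_lborel_prod[where f="\<lambda>b t. W t (x1 \<bullet> b) (x2 \<bullet> b)"])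
     (auto simp: W_int W_pos less_imp_le)


lemma sets_chan[simp, measurable_cong]: "sets (chan a b) = sets borel"
  by (simp add: chan_def)

lemma space_chan[simp]: "space (chan a b) = UNIV"
  by (simp add: chan_def)

lemma emeasure_chan: "S \<in> sets borel \<Longrightarrow> emeasure (chan a b) S = (\<integral>\<^sup>+ y. ennreal (Wn y a b) * indicator S y \<partial>lborel)"
  unfolding chan_def by (subst emeasure_density) auto

lemma prob_chan: "prob_space (chan a b)"
  by (rule prob_spaceI) (simp add: emeasure_chan Wn_int)

lemma chan_kernel[measurable]:
  fixes f g :: "'a \<Rightarrow> real^'n"
  assumes [measurable]: "f \<in> borel_measurable M" "g \<in> borel_measurable M"
  shows "(\<lambda>x. chan (f x) (g x)) \<in> measurable M (subprob_algebra borel)"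
proof (rule measurable_subprob_algebra)
  fix a show "subprob_space (chan (f a) (g a))"
    using prob_chan prob_space_imp_subprob_space by blast
next
  fix a show "sets (chan (f a) (g a)) = sets borel" by simp
next
  fix A :: "(real^'n) set" assume A[measurable]: "A \<in> sets borel"
  have "(\<lambda>x. \<integral>\<^sup>+ y. ennreal (Wn y (f x) (g x)) * indicator A y \<partial>lborel) \<in> borel_measurable M"
    by measurable
  then show "(\<lambda>x. emeasure (chan (f x) (g x)) A) \<in> borel_measurable M"
    by (simp add: emeasure_chan)
qed

lemma Q_meas_comp[measurable (raw)]:
  fixes Q :: "'b::second_countable_topology \<Rightarrow> 'c::second_countable_topology \<Rightarrow> real"
  assumes "(\<lambda>(y, x). Q y x) \<in> borel_measurable borel"
    and "f \<in> borel_measurable M" "g \<in> borel_measurable M"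
  shows "(\<lambda>x. Q (f x) (g x)) \<in> borel_measurable M"
proof -
  have "(\<lambda>x. (f x, g x)) \<in> measurable M borel"
    using assms(2,3) by (subst borel_prod[symmetric]) measurable
  from measurable_compose[OF this assms(1)] show ?thesis by simp
qed


lemma select_AE:
  assumes "prob_space M" "AE x in M. P x" "\<phi> \<in> borel_measurable M"
  shows "\<exists>x\<in>space M. P x \<and> \<phi> x \<le> (\<integral>\<^sup>+ x. \<phi> x \<partial>M)"
proof (rule ccontr)
  interpret prob_space M by fact
  assume H: "\<not> ?thesis"
  define I where "I = (\<integral>\<^sup>+ x. \<phi> x \<partial>M)"
  have A: "AE x in M. P x \<and> I < \<phi> x"
    using assms(2) AE_space by eventually_elim (use H I_def in \<open>auto simp: not_le\<close>)
  show False
  proof (cases "I = \<infinity>")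
    case True
    have "AE x in M. False" using A by (rule eventually_mono) (simp add: True)
    then show False using AE_False by simp
  next
    case False
    have "(\<integral>\<^sup>+x. I \<partial>M) < (\<integral>\<^sup>+x. \<phi> x \<partial>M)"
    proof (rule nn_integral_less)
      show "integral\<^sup>N M (\<lambda>x. I) \<noteq> \<infinity>" using False by (simp add: emeasure_space_1)
      show "AE x in M. I \<le> \<phi> x" using A by eventually_elim auto
      show "\<not> (AE x in M. \<phi> x \<le> I)"
      proof
        assume "AE x in M. \<phi> x \<le> I"
        from this A have "AE x in M. False" by eventually_elim auto
        then show False using AE_False by simp
      qed
    qed (use assms in auto)
    then show False by (simp add: emeasure_space_1 I_def)
  qed
qed

lemma select_slots:
  fixes \<mu> :: "'i \<Rightarrow> 'a measure" and f :: "'i \<Rightarrow> 'a \<Rightarrow> ennreal"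
    and g :: "'i \<Rightarrow> 'i \<Rightarrow> 'a \<Rightarrow> 'a \<Rightarrow> ennreal"
  assumes fin: "finite I"
    and prob: "\<And>i. i \<in> I \<Longrightarrow> prob_space (\<mu> i)"
    and good: "\<And>i. i \<in> I \<Longrightarrow> AE x in \<mu> i. G i x"
    and fm: "\<And>i. i \<in> I \<Longrightarrow> f i \<in> borel_measurable (\<mu> i)"
    and gm: "\<And>i j. i \<in> I \<Longrightarrow> j \<in> I \<Longrightarrow> i \<noteq> j \<Longrightarrow> (\<lambda>(x,y). g i j x y) \<in> borel_measurable (\<mu> i \<Otimes>\<^sub>M \<mu> j)"
  shows "\<exists>x. (\<forall>i\<in>I. x i \<in> space (\<mu> i) \<and> G i (x i)) \<and>
    (\<Sum>i\<in>I. f i (x i)) + (\<Sum>i\<in>I. \<Sum>j\<in>I-{i}. g i j (x i) (x j))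
      \<le> (\<Sum>i\<in>I. \<integral>\<^sup>+ x. f i x \<partial>\<mu> i) + (\<Sum>i\<in>I. \<Sum>j\<in>I-{i}. \<integral>\<^sup>+ x. \<integral>\<^sup>+ y. g i j x y \<partial>\<mu> j \<partial>\<mu> i)"
  using fin prob good fm gm
proof (induction I arbitrary: f rule: finite_induct)
  case empty
  then show ?case by simp
next
  case (insert a I)
  note prob = insert.prems(1) and good = insert.prems(2) and fm = insert.prems(3) and gm = insert.prems(4)
  have aI: "a \<notin> I" by fact
  have sf: "\<And>i. i \<in> insert a I \<Longrightarrow> sigma_finite_measure (\<mu> i)"
    using prob by (simp add: prob_space_imp_sigma_finite)
  have gm1: "\<And>j x. j \<in> I \<Longrightarrow> x \<in> space (\<mu> a) \<Longrightarrow> g a j x \<in> borel_measurable (\<mu> j)"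
  proof -
    fix j x assume j: "j \<in> I" and x: "x \<in> space (\<mu> a)"
    have "(\<lambda>(x,y). g a j x y) \<in> borel_measurable (\<mu> a \<Otimes>\<^sub>M \<mu> j)" using gm j aI by auto
    from measurable_Pair2[OF this x] show "g a j x \<in> borel_measurable (\<mu> j)" by simp
  qed
  have gm2: "\<And>j x. j \<in> I \<Longrightarrow> x \<in> space (\<mu> a) \<Longrightarrow> (\<lambda>y. g j a y x) \<in> borel_measurable (\<mu> j)"
  proof -
    fix j x assume j: "j \<in> I" and x: "x \<in> space (\<mu> a)"
    have "(\<lambda>(y,x). g j a y x) \<in> borel_measurable (\<mu> j \<Otimes>\<^sub>M \<mu> a)" using gm j aI by auto
    from measurable_Pair1[OF this x] show "(\<lambda>y. g j a y x) \<in> borel_measurable (\<mu> j)" by simp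
  qed
  define \<phi> where "\<phi> x = f a x + (\<Sum>j\<in>I. (\<integral>\<^sup>+ y. g a j x y \<partial>\<mu> j) + (\<integral>\<^sup>+ y. g j a y x \<partial>\<mu> j))" for x
  have m1: "(\<lambda>x. \<integral>\<^sup>+ y. g a j x y \<partial>\<mu> j) \<in> borel_measurable (\<mu> a)" if j: "j \<in> I" for j
  proof -
    interpret sigma_finite_measure "\<mu> j" using sf j by auto
    show ?thesis
      by (rule borel_measurable_nn_integral) (use gm j aI in auto)
  qed
  have m2: "(\<lambda>x. \<integral>\<^sup>+ y. g j a y x \<partial>\<mu> j) \<in> borel_measurable (\<mu> a)" if j: "j \<in> I" for j
  proof -
    interpret sigma_finite_measure "\<mu> j" using sf j by auto
    have "(\<lambda>(y,x). g j a y x) \<in> borel_measurable (\<mu> j \<Otimes>\<^sub>M \<mu> a)" using gm j aI by auto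
    from measurable_pair_swap[OF this]
    have "(\<lambda>(x,y). g j a y x) \<in> borel_measurable (\<mu> a \<Otimes>\<^sub>M \<mu> j)" by (simp add: case_prod_beta)
    then show ?thesis by (rule borel_measurable_nn_integral)
  qed
  have \<phi>m: "\<phi> \<in> borel_measurable (\<mu> a)"
    unfolding \<phi>_def using fm m1 m2 by (intro borel_measurable_add borel_measurable_sum) auto
  have tonelli: "(\<integral>\<^sup>+ x. \<integral>\<^sup>+ y. g j a y x \<partial>\<mu> j \<partial>\<mu> a) = (\<integral>\<^sup>+ y. \<integral>\<^sup>+ x. g j a y x \<partial>\<mu> a \<partial>\<mu> j)"
    if j: "j \<in> I" for j
  proof -
    interpret pair_sigma_finite "\<mu> j" "\<mu> a" using sf j
      by (simp add: pair_sigma_finite_def)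
    show ?thesis
      by (rule Fubini') (use gm j aI in auto)
  qed
  have int\<phi>: "(\<integral>\<^sup>+ x. \<phi> x \<partial>\<mu> a) = (\<integral>\<^sup>+ x. f a x \<partial>\<mu> a) +
      (\<Sum>j\<in>I. (\<integral>\<^sup>+ x. \<integral>\<^sup>+ y. g a j x y \<partial>\<mu> j \<partial>\<mu> a) + (\<integral>\<^sup>+ y. \<integral>\<^sup>+ x. g j a y x \<partial>\<mu> a \<partial>\<mu> j))"
    unfolding \<phi>_def using fm m1 m2
    by (simp add: nn_integral_add nn_integral_sum borel_measurable_sum tonelli)
  obtain xa where xa: "xa \<in> space (\<mu> a)" "G a xa" "\<phi> xa \<le> (\<integral>\<^sup>+ x. \<phi> x \<partial>\<mu> a)"
    using select_AE[OF prob[of a] good[of a] \<phi>m] by auto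
  define f' where "f' j y = f j y + g a j xa y + g j a y xa" for j y
  have f'm: "f' j \<in> borel_measurable (\<mu> j)" if "j \<in> I" for j
    unfolding f'_def using fm gm1 gm2 that xa by auto
  obtain x where x: "\<forall>i\<in>I. x i \<in> space (\<mu> i) \<and> G i (x i)"
    and xle: "(\<Sum>i\<in>I. f' i (x i)) + (\<Sum>i\<in>I. \<Sum>j\<in>I-{i}. g i j (x i) (x j))
      \<le> (\<Sum>i\<in>I. \<integral>\<^sup>+ x. f' i x \<partial>\<mu> i) + (\<Sum>i\<in>I. \<Sum>j\<in>I-{i}. \<integral>\<^sup>+ x. \<integral>\<^sup>+ y. g i j x y \<partial>\<mu> j \<partial>\<mu> i)"
    using insert.IH[of f'] prob good f'm gm by auto
  define x' where "x' = x(a := xa)"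
  have x'I: "\<And>i. i \<in> I \<Longrightarrow> x' i = x i" using aI by (auto simp: x'_def)
  have x'a: "x' a = xa" by (simp add: x'_def)
  have intf': "(\<Sum>i\<in>I. \<integral>\<^sup>+ x. f' i x \<partial>\<mu> i) = (\<Sum>i\<in>I. \<integral>\<^sup>+ x. f i x \<partial>\<mu> i) +
      (\<Sum>j\<in>I. (\<integral>\<^sup>+ y. g a j xa y \<partial>\<mu> j) + (\<integral>\<^sup>+ y. g j a y xa \<partial>\<mu> j))"
    unfolding f'_def using fm gm1 gm2 xa
    by (simp add: nn_integral_add sum.distrib add.assoc)
  have sum_pairs: "\<And>h :: 'i \<Rightarrow> 'i \<Rightarrow> ennreal. (\<Sum>i\<in>insert a I. \<Sum>j\<in>insert a I-{i}. h i j)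
     = (\<Sum>j\<in>I. h a j + h j a) + (\<Sum>i\<in>I. \<Sum>j\<in>I-{i}. h i j)"
  proof -
    fix h :: "'i \<Rightarrow> 'i \<Rightarrow> ennreal"
    have e1: "\<And>i. i \<in> I \<Longrightarrow> insert a I - {i} = insert a (I - {i})" using aI by auto
    have "(\<Sum>i\<in>insert a I. \<Sum>j\<in>insert a I-{i}. h i j) = (\<Sum>j\<in>I. h a j) + (\<Sum>i\<in>I. \<Sum>j\<in>insert a I-{i}. h i j)"
      using insert.hyps by (simp add: sum.insert)
    also have "(\<Sum>i\<in>I. \<Sum>j\<in>insert a I-{i}. h i j) = (\<Sum>i\<in>I. h i a + (\<Sum>j\<in>I-{i}. h i j))"
      by (rule sum.cong) (use insert.hyps e1 in auto)
    finally show "(\<Sum>i\<in>insert a I. \<Sum>j\<in>insert a I-{i}. h i j)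
     = (\<Sum>j\<in>I. h a j + h j a) + (\<Sum>i\<in>I. \<Sum>j\<in>I-{i}. h i j)"
      by (simp add: sum.distrib algebra_simps)
  qed
  show ?case
  proof (intro exI conjI)
    show "\<forall>i\<in>insert a I. x' i \<in> space (\<mu> i) \<and> G i (x' i)"
      using x xa x'I x'a by auto
    have "(\<Sum>i\<in>insert a I. f i (x' i)) + (\<Sum>i\<in>insert a I. \<Sum>j\<in>insert a I-{i}. g i j (x' i) (x' j))
       = f a xa + ((\<Sum>i\<in>I. f' i (x i)) + (\<Sum>i\<in>I. \<Sum>j\<in>I-{i}. g i j (x i) (x j)))"
    proof -
      have e1: "(\<Sum>i\<in>I. \<Sum>j\<in>I-{i}. g i j (x' i) (x' j)) = (\<Sum>i\<in>I. \<Sum>j\<in>I-{i}. g i j (x i) (x j))"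
        by (intro sum.cong) (auto simp: x'I)
      have e2: "(\<Sum>j\<in>I. g a j (x' a) (x' j) + g j a (x' j) (x' a)) = (\<Sum>j\<in>I. g a j xa (x j) + g j a (x j) xa)"
        by (intro sum.cong) (auto simp: x'I x'a)
      have e3: "(\<Sum>i\<in>insert a I. f i (x' i)) = f a xa + (\<Sum>i\<in>I. f i (x i))"
        using insert.hyps by (simp add: x'I x'a)
      have e4: "(\<Sum>i\<in>I. f' i (x i)) = (\<Sum>i\<in>I. f i (x i)) + (\<Sum>j\<in>I. g a j xa (x j) + g j a (x j) xa)"
        by (simp add: f'_def sum.distrib add.assoc)
      show ?thesis
        unfolding sum_pairs[of "\<lambda>i j. g i j (x' i) (x' j)"] e1 e2 e3 e4
        by (simp add: algebra_simps)
    qed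
    also have "\<dots> \<le> f a xa + ((\<Sum>i\<in>I. \<integral>\<^sup>+ x. f' i x \<partial>\<mu> i) + (\<Sum>i\<in>I. \<Sum>j\<in>I-{i}. \<integral>\<^sup>+ x. \<integral>\<^sup>+ y. g i j x y \<partial>\<mu> j \<partial>\<mu> i))"
      using xle by (rule add_left_mono)
    also have "\<dots> = \<phi> xa + (\<Sum>i\<in>I. \<integral>\<^sup>+ x. f i x \<partial>\<mu> i) + (\<Sum>i\<in>I. \<Sum>j\<in>I-{i}. \<integral>\<^sup>+ x. \<integral>\<^sup>+ y. g i j x y \<partial>\<mu> j \<partial>\<mu> i)"
      unfolding intf' \<phi>_def by (simp add: algebra_simps)
    also have "\<dots> \<le> (\<integral>\<^sup>+ x. \<phi> x \<partial>\<mu> a) + (\<Sum>i\<in>I. \<integral>\<^sup>+ x. f i x \<partial>\<mu> i) + (\<Sum>i\<in>I. \<Sum>j\<in>I-{i}. \<integral>\<^sup>+ x. \<integral>\<^sup>+ y. g i j x y \<partial>\<mu> j \<partial>\<mu> i)"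
      using xa(3) by (intro add_right_mono)
    also have "\<dots> = (\<Sum>i\<in>insert a I. \<integral>\<^sup>+ x. f i x \<partial>\<mu> i) + (\<Sum>i\<in>insert a I. \<Sum>j\<in>insert a I-{i}. \<integral>\<^sup>+ x. \<integral>\<^sup>+ y. g i j x y \<partial>\<mu> j \<partial>\<mu> i)"
      unfolding sum_pairs[of "\<lambda>i j. \<integral>\<^sup>+ x. \<integral>\<^sup>+ y. g i j x y \<partial>\<mu> j \<partial>\<mu> i"] int\<phi>
      using insert.hyps by (simp add: algebra_simps)
    finally show "(\<Sum>i\<in>insert a I. f i (x' i)) + (\<Sum>i\<in>insert a I. \<Sum>j\<in>insert a I-{i}. g i j (x' i) (x' j))
      \<le> (\<Sum>i\<in>insert a I. \<integral>\<^sup>+ x. f i x \<partial>\<mu> i) + (\<Sum>i\<in>insert a I. \<Sum>j\<in>insert a I-{i}. \<integral>\<^sup>+ x. \<integral>\<^sup>+ y. g i j x y \<partial>\<mu> j \<partial>\<mu> i)" .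
  qed
qed


lemma snd_borel: "snd \<in> measurable (borel::('a::second_countable_topology\<times>'b::second_countable_topology) measure) borel"
  by (subst borel_prod[symmetric]) simp

lemma fst_borel: "fst \<in> measurable (borel::('a::second_countable_topology\<times>'b::second_countable_topology) measure) borel"
  by (subst borel_prod[symmetric]) simp

lemma sets_borel_prod: "sets (borel :: ('a::second_countable_topology\<times>'b::second_countable_topology) measure) = sets (borel \<Otimes>\<^sub>M borel)"
  by (metis borel_prod)

locale mac =
  fixes P :: "((real^'n) \<times> (real^'n)) measure" and K :: "real^'n \<Rightarrow> (real^'n) measure"
    and Q1 :: "real^'n \<Rightarrow> real^'n \<Rightarrow> real" and Q :: "real^'n \<Rightarrow> real"
    and M1 M2 :: nat and \<gamma> :: real
  assumes M1_pos: "M1 > 0" and M2_pos: "M2 > 0"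
    and P_prob: "prob_space P" and P_sets: "sets P = sets borel"
    and K_meas[measurable]: "K \<in> measurable borel (subprob_algebra borel)"
    and K_prob: "\<And>x2. prob_space (K x2)"
    and K_disint: "P = distr P borel snd \<bind> (\<lambda>x2. distr (K x2) borel (\<lambda>x1. (x1, x2)))"
    and Q1_pos: "\<And>y x2. Q1 y x2 > 0"
    and Q1_meas: "(\<lambda>(y, x2). Q1 y x2) \<in> borel_measurable borel"
    and Q_pos: "\<And>y. Q y > 0"
    and Q_meas[measurable]: "Q \<in> borel_measurable borel"
    and \<gamma>_pos: "\<gamma> > 0"
begin

lemmas Q1m = Q_meas_comp[OF Q1_meas]

definition "PX2 = distr P borel snd"
definition "T1 = ln (real M1) + real CARD('n) * \<gamma>"
definition "T2 = ln (real M1 * real M2) + real CARD('n) * \<gamma>"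
definition "pass1 x1 x2 y \<longleftrightarrow> T1 < ln (Wn y x1 x2 / Q1 y x2)"
definition "pass2 x1 x2 y \<longleftrightarrow> T2 < ln (Wn y x1 x2 / Q y)"
definition "cc = ennreal (exp (- real CARD('n) * \<gamma>))"
definition "\<Lambda>1 = (SUP x2. SUP y. (\<integral>\<^sup>+ x1. ennreal (Wn y x1 x2) \<partial>K x2) / ennreal (Q1 y x2))"
definition "\<Lambda>12 = (SUP y. (\<integral>\<^sup>+ x. ennreal (Wn y (fst x) (snd x)) \<partial>P) / ennreal (Q y))"

lemma pass1_meas[measurable]:
  assumes [measurable]: "f \<in> borel_measurable M" "g \<in> borel_measurable M" "h \<in> borel_measurable M"
  shows "Measurable.pred M (\<lambda>x. pass1 (f x) (g x) (h x))"
proof -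
  have "(\<lambda>x. ln (Wn (h x) (f x) (g x) / Q1 (h x) (g x))) \<in> borel_measurable M"
    by (intro borel_measurable_ln borel_measurable_divide Wn_meas Q1m assms)
  then show ?thesis unfolding pass1_def by measurable
qed

lemma pass2_meas[measurable]:
  assumes [measurable]: "f \<in> borel_measurable M" "g \<in> borel_measurable M" "h \<in> borel_measurable M"
  shows "Measurable.pred M (\<lambda>x. pass2 (f x) (g x) (h x))"
proof -
  have "(\<lambda>x. ln (Wn (h x) (f x) (g x) / Q (h x))) \<in> borel_measurable M"
    by (intro borel_measurable_ln borel_measurable_divide Wn_meas measurable_compose[OF _ Q_meas] assms)
  then show ?thesis unfolding pass2_def by measurable
qed

lemma sets_K[simp, measurable_cong]: "sets (K x) = sets borel"
  using measurable_space[OF K_meas, of x] by (simp add: space_subprob_algebra)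

lemma space_K[simp]: "space (K x) = UNIV"
  using sets_eq_imp_space_eq[OF sets_K[of x]] by simp

lemma space_P[simp]: "space P = UNIV"
  using sets_eq_imp_space_eq[OF P_sets] by simp

lemma PX2_prob: "prob_space PX2"
  unfolding PX2_def using P_prob
  by (intro prob_space.prob_space_distr) (auto simp: measurable_cong_sets[OF P_sets refl] snd_borel)

lemma sets_PX2[simp, measurable_cong]: "sets PX2 = sets borel"
  by (simp add: PX2_def)

lemma space_PX2[simp]: "space PX2 = UNIV"
  by (simp add: PX2_def)

lemma swap_meas: "(\<lambda>(x2::real^'n, x1::real^'n). (x1, x2)) \<in> measurable (PX2 \<Otimes>\<^sub>M borel) borel"
proof -
  have "(\<lambda>(x2::real^'n, x1::real^'n). (x1, x2)) \<in> measurable (PX2 \<Otimes>\<^sub>M borel) (borel \<Otimes>\<^sub>M borel)"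
    by measurable
  then show ?thesis by (simp add: borel_prod)
qed

lemma K_meas': "K \<in> measurable PX2 (subprob_algebra borel)"
  by (simp add: measurable_cong_sets[OF sets_PX2 refl])

lemma kern_meas: "(\<lambda>x2. distr (K x2) borel (\<lambda>x1. (x1, x2))) \<in> measurable PX2 (subprob_algebra borel)"
  using measurable_distr2[OF swap_meas K_meas'] by simp

lemma P_bind: "P = PX2 \<bind> (\<lambda>x2. distr (K x2) borel (\<lambda>x1. (x1, x2)))"
  using K_disint unfolding PX2_def .

lemma P_disint:
  assumes h: "h \<in> borel_measurable borel"
  shows "(\<integral>\<^sup>+ x. h x \<partial>P) = (\<integral>\<^sup>+ x2. \<integral>\<^sup>+ x1. h (x1, x2) \<partial>K x2 \<partial>PX2)"
proof -
  have "(\<integral>\<^sup>+ x. h x \<partial>P) = (\<integral>\<^sup>+ x2. \<integral>\<^sup>+ y. h y \<partial>distr (K x2) borel (\<lambda>x1. (x1, x2)) \<partial>PX2)"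
    by (subst P_bind, rule nn_integral_bind[OF h kern_meas])
  also have "\<dots> = (\<integral>\<^sup>+ x2. \<integral>\<^sup>+ x1. h (x1, x2) \<partial>K x2 \<partial>PX2)"
  proof (rule nn_integral_cong)
    fix x2
    have m: "(\<lambda>x1::real^'n. (x1, x2)) \<in> measurable (K x2) borel"
      by (simp add: measurable_cong_sets[OF sets_K refl] borel_prod[symmetric])
    show "(\<integral>\<^sup>+ y. h y \<partial>distr (K x2) borel (\<lambda>x1. (x1, x2))) = (\<integral>\<^sup>+ x1. h (x1, x2) \<partial>K x2)"
      by (rule nn_integral_distr[OF m]) (simp add: h)
  qed
  finally show ?thesis .
qed

lemma P_AE:
  assumes "AE x in P. R x" and [measurable]: "Measurable.pred borel R"
  shows "AE x2 in PX2. AE x1 in K x2. R (x1, x2)"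
proof -
  have "AE x in PX2 \<bind> (\<lambda>x2. distr (K x2) borel (\<lambda>x1. (x1, x2))). R x"
    unfolding P_bind[symmetric] by (rule assms(1))
  then have "AE x2 in PX2. AE y in distr (K x2) borel (\<lambda>x1. (x1, x2)). R y"
    by (subst (asm) AE_bind[OF kern_meas]) auto
  then show ?thesis
  proof (rule AE_mp[OF _ AE_I2], intro impI)
    fix x2 assume "AE y in distr (K x2) borel (\<lambda>x1. (x1, x2)). R y"
    moreover have m: "(\<lambda>x1::real^'n. (x1, x2)) \<in> measurable (K x2) borel"
      by (simp add: measurable_cong_sets[OF sets_K refl] borel_prod[symmetric])
    ultimately show "AE x1 in K x2. R (x1, x2)"
      by (subst (asm) AE_distr_iff[OF m]) auto
  qed
qed

end


lemma comp2:
  fixes h :: "'a::second_countable_topology \<Rightarrow> 'b::second_countable_topology \<Rightarrow> 'c"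
  assumes "(\<lambda>(x, y). h x y) \<in> measurable borel N"
    and "a \<in> measurable M borel" "b \<in> measurable M borel"
  shows "(\<lambda>z. h (a z) (b z)) \<in> measurable M N"
proof -
  have "(\<lambda>z. (a z, b z)) \<in> measurable M borel"
    by (subst borel_prod[symmetric]) (intro measurable_Pair assms(2,3))
  from measurable_compose[OF this assms(1)] show ?thesis by (simp only: case_prod_conv)
qed

lemma gen_bound:
  fixes \<mu> \<nu> :: "('a::second_countable_topology) measure" and w :: "'a \<Rightarrow> real^'n \<Rightarrow> real"
    and pass :: "'a \<Rightarrow> real^'n \<Rightarrow> bool" and q :: "real^'n \<Rightarrow> real"
  assumes pm: "prob_space \<mu>" and pn: "prob_space \<nu>"
    and sm[measurable_cong]: "sets \<mu> = sets borel" and sn[measurable_cong]: "sets \<nu> = sets borel"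
    and wm: "(\<lambda>(x,y). w x y) \<in> borel_measurable borel"
    and pp: "Measurable.pred borel (\<lambda>(x,y). pass x y)"
    and wpos: "\<And>x y. w x y \<ge> 0"
    and Nb: "\<And>y. (\<integral>\<^sup>+ x. ennreal (w x y) \<partial>\<mu>) \<le> \<Lambda> * ennreal (q y)"
    and passb: "\<And>x' y. pass x' y \<Longrightarrow> cz * ennreal (q y) \<le> ce * ennreal (w x' y)"
    and wint: "\<And>x'. (\<integral>\<^sup>+ y. ennreal (w x' y) \<partial>lborel) = 1"
  shows "cz * (\<integral>\<^sup>+ x. \<integral>\<^sup>+ x'. \<integral>\<^sup>+ y. ennreal (w x y) * indicator {y. pass x' y} y \<partial>lborel \<partial>\<nu> \<partial>\<mu>) \<le> \<Lambda> * ce"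
proof -
  interpret \<mu>: prob_space \<mu> by fact
  interpret \<nu>: prob_space \<nu> by fact
  interpret \<mu>l: pair_sigma_finite \<mu> lborel by (simp add: pair_sigma_finite_def \<mu>.sigma_finite_measure_axioms lborel.sigma_finite_measure_axioms)
  interpret \<mu>\<nu>: pair_sigma_finite \<mu> \<nu> by (simp add: pair_sigma_finite_def \<mu>.sigma_finite_measure_axioms \<nu>.sigma_finite_measure_axioms)
  have ind_eq: "\<And>x' y. indicator {y. pass x' y} y = (of_bool (pass x' y) :: ennreal)"
    by (simp add: indicator_def)
  define F where "F x' x y = ennreal (w x y) * of_bool (pass x' y)" for x' x y
  have Fm: "(\<lambda>(x, y). F x' x y) \<in> borel_measurable (\<mu> \<Otimes>\<^sub>M lborel)" for x'
  proof -
    have a1: "fst \<in> measurable (\<mu> \<Otimes>\<^sub>M lborel) borel" by measurable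
    have a2: "snd \<in> measurable (\<mu> \<Otimes>\<^sub>M lborel) borel" by measurable
    have c2: "Measurable.pred (\<mu> \<Otimes>\<^sub>M lborel) (\<lambda>p. pass x' (snd p))"
      by (rule comp2[OF pp _ a2]) simp
    have "(\<lambda>p. F x' (fst p) (snd p)) \<in> borel_measurable (\<mu> \<Otimes>\<^sub>M lborel)"
      unfolding F_def
      by (rule borel_measurable_times_ennreal[OF measurable_compose[OF comp2[OF wm a1 a2] measurable_ennreal] measurable_compose[OF c2 measurable_of_bool]])
    then show ?thesis by (simp add: case_prod_beta')
  qed
  have Gm0: "(\<lambda>p. F (snd (fst p)) (fst (fst p)) (snd p)) \<in> borel_measurable ((\<mu> \<Otimes>\<^sub>M \<nu>) \<Otimes>\<^sub>M lborel)"
  proof -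
    have a1: "(\<lambda>p. fst (fst p)) \<in> measurable ((\<mu> \<Otimes>\<^sub>M \<nu>) \<Otimes>\<^sub>M lborel) borel" by measurable
    have a3: "(\<lambda>p. snd (fst p)) \<in> measurable ((\<mu> \<Otimes>\<^sub>M \<nu>) \<Otimes>\<^sub>M lborel) borel" by measurable
    have a2: "snd \<in> measurable ((\<mu> \<Otimes>\<^sub>M \<nu>) \<Otimes>\<^sub>M lborel) borel" by measurable
    show ?thesis unfolding F_def
      by (rule borel_measurable_times_ennreal[OF measurable_compose[OF comp2[OF wm a1 a2] measurable_ennreal] measurable_compose[OF comp2[OF pp a3 a2] measurable_of_bool]])
  qed
  have Gm: "(\<lambda>(x, x'). \<integral>\<^sup>+ y. F x' x y \<partial>lborel) \<in> borel_measurable (\<mu> \<Otimes>\<^sub>M \<nu>)"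
    using lborel.borel_measurable_nn_integral_fst[OF Gm0] by (simp add: case_prod_beta')
  have Hm: "(\<lambda>x'. \<integral>\<^sup>+ x. \<integral>\<^sup>+ y. F x' x y \<partial>lborel \<partial>\<mu>) \<in> borel_measurable \<nu>"
  proof -
    have "(\<lambda>(x', x). \<integral>\<^sup>+ y. F x' x y \<partial>lborel) \<in> borel_measurable (\<nu> \<Otimes>\<^sub>M \<mu>)"
      using measurable_pair_swap[OF Gm] by (simp add: case_prod_beta')
    then show ?thesis by (rule \<mu>.borel_measurable_nn_integral)
  qed
  have wy: "(\<lambda>x. ennreal (w x y)) \<in> borel_measurable \<mu>" for y
    by (rule measurable_compose[OF comp2[OF wm] measurable_ennreal]) (simp_all add: measurable_cong_sets[OF sm refl])
  have Nm: "(\<lambda>y. \<integral>\<^sup>+ x. ennreal (w x y) \<partial>\<mu>) \<in> borel_measurable lborel"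
  proof -
    have a1: "fst \<in> measurable (lborel \<Otimes>\<^sub>M \<mu>) borel" by measurable
    have a2: "snd \<in> measurable (lborel \<Otimes>\<^sub>M \<mu>) borel" by measurable
    have "(\<lambda>(y, x). ennreal (w x y)) \<in> borel_measurable (lborel \<Otimes>\<^sub>M \<mu>)"
      unfolding case_prod_beta' by (rule measurable_compose[OF comp2[OF wm a2 a1] measurable_ennreal])
    then show ?thesis by (rule \<mu>.borel_measurable_nn_integral)
  qed
  have indm: "(\<lambda>y. of_bool (pass x' y) :: ennreal) \<in> borel_measurable lborel" for x'
    by (rule measurable_compose[OF comp2[OF pp] measurable_of_bool]) simp_all
  have step1: "(\<integral>\<^sup>+ x. \<integral>\<^sup>+ x'. \<integral>\<^sup>+ y. F x' x y \<partial>lborel \<partial>\<nu> \<partial>\<mu>)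
      = (\<integral>\<^sup>+ x'. \<integral>\<^sup>+ x. \<integral>\<^sup>+ y. F x' x y \<partial>lborel \<partial>\<mu> \<partial>\<nu>)"
    using \<mu>\<nu>.Fubini'[OF Gm] by simp
  have pw: "cz * (\<integral>\<^sup>+ x. \<integral>\<^sup>+ y. F x' x y \<partial>lborel \<partial>\<mu>) \<le> \<Lambda> * ce" for x'
  proof -
    have "(\<integral>\<^sup>+ x. \<integral>\<^sup>+ y. F x' x y \<partial>lborel \<partial>\<mu>) = (\<integral>\<^sup>+ y. \<integral>\<^sup>+ x. F x' x y \<partial>\<mu> \<partial>lborel)"
      using \<mu>l.Fubini'[OF Fm] by simp
    also have "\<dots> = (\<integral>\<^sup>+ y. (\<integral>\<^sup>+ x. ennreal (w x y) \<partial>\<mu>) * of_bool (pass x' y) \<partial>lborel)"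
      unfolding F_def by (intro nn_integral_cong nn_integral_multc wy)
    finally have "cz * (\<integral>\<^sup>+ x. \<integral>\<^sup>+ y. F x' x y \<partial>lborel \<partial>\<mu>)
       = cz * (\<integral>\<^sup>+ y. (\<integral>\<^sup>+ x. ennreal (w x y) \<partial>\<mu>) * of_bool (pass x' y) \<partial>lborel)" by simp
    also have "\<dots> = (\<integral>\<^sup>+ y. cz * ((\<integral>\<^sup>+ x. ennreal (w x y) \<partial>\<mu>) * of_bool (pass x' y)) \<partial>lborel)"
      by (rule nn_integral_cmult[symmetric]) (intro borel_measurable_times_ennreal Nm indm)
    also have "\<dots> \<le> (\<integral>\<^sup>+ y. \<Lambda> * ce * ennreal (w x' y) \<partial>lborel)"
    proof (intro nn_integral_mono)
      fix y
      show "cz * ((\<integral>\<^sup>+ x. ennreal (w x y) \<partial>\<mu>) * of_bool (pass x' y)) \<le> \<Lambda> * ce * ennreal (w x' y)"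
      proof (cases "pass x' y")
        case True
        have "cz * (\<integral>\<^sup>+ x. ennreal (w x y) \<partial>\<mu>) \<le> cz * (\<Lambda> * ennreal (q y))"
          by (intro mult_left_mono Nb) simp
        also have "\<dots> = \<Lambda> * (cz * ennreal (q y))" by (simp add: algebra_simps)
        also have "\<dots> \<le> \<Lambda> * (ce * ennreal (w x' y))"
          by (intro mult_left_mono passb True) simp
        finally show ?thesis using True by (simp add: algebra_simps)
      qed simp
    qed
    also have "\<dots> = \<Lambda> * ce"
    proof -
      have "(\<lambda>y. ennreal (w x' y)) \<in> borel_measurable lborel"
        by (rule measurable_compose[OF comp2[OF wm] measurable_ennreal]) simp_all
      then show ?thesis by (simp only: nn_integral_cmult wint mult_1_right)
    qed
    finally show ?thesis .
  qed
  have "cz * (\<integral>\<^sup>+ x'. \<integral>\<^sup>+ x. \<integral>\<^sup>+ y. F x' x y \<partial>lborel \<partial>\<mu> \<partial>\<nu>)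
      = (\<integral>\<^sup>+ x'. cz * (\<integral>\<^sup>+ x. \<integral>\<^sup>+ y. F x' x y \<partial>lborel \<partial>\<mu>) \<partial>\<nu>)"
    by (rule nn_integral_cmult[symmetric, OF Hm])
  also have "\<dots> \<le> (\<integral>\<^sup>+ x'. \<Lambda> * ce \<partial>\<nu>)"
    by (intro nn_integral_mono pw)
  also have "\<dots> = \<Lambda> * ce" by (simp add: \<nu>.emeasure_space_1)
  finally have "cz * (\<integral>\<^sup>+ x. \<integral>\<^sup>+ x'. \<integral>\<^sup>+ y. F x' x y \<partial>lborel \<partial>\<nu> \<partial>\<mu>) \<le> \<Lambda> * ce"
    unfolding step1 .
  then show ?thesis unfolding ind_eq F_def .
qed


context mac
begin

definition "A x1 x2 = (\<integral>\<^sup>+ y. ennreal (Wn y x1 x2) * indicator {y. \<not> (pass1 x1 x2 y \<and> pass2 x1 x2 y)} y \<partial>lborel)"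
definition "B1 x1 x2 x1' = (\<integral>\<^sup>+ y. ennreal (Wn y x1 x2) * indicator {y. pass1 x1' x2 y} y \<partial>lborel)"
definition "B2 x1 x2 x1' x2' = (\<integral>\<^sup>+ y. ennreal (Wn y x1 x2) * indicator {y. pass2 x1' x2' y} y \<partial>lborel)"

lemma int_meas:
  fixes f g :: "'a \<Rightarrow> real^'n"
  assumes f: "f \<in> measurable M borel" and g: "g \<in> measurable M borel"
    and R: "Measurable.pred (M \<Otimes>\<^sub>M lborel) (\<lambda>p. R (fst p) (snd p))"
  shows "(\<lambda>z. \<integral>\<^sup>+ y. ennreal (Wn y (f z) (g z)) * indicator {y. R z y} y \<partial>lborel) \<in> borel_measurable M"
proof -
  have a1: "(\<lambda>p. f (fst p)) \<in> measurable (M \<Otimes>\<^sub>M lborel) borel" by (rule measurable_compose[OF measurable_fst f])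
  have a2: "(\<lambda>p. g (fst p)) \<in> measurable (M \<Otimes>\<^sub>M lborel) borel" by (rule measurable_compose[OF measurable_fst g])
  have a3: "snd \<in> measurable (M \<Otimes>\<^sub>M lborel) borel" by measurable
  have "(\<lambda>p. ennreal (Wn (snd p) (f (fst p)) (g (fst p))) * of_bool (R (fst p) (snd p))) \<in> borel_measurable (M \<Otimes>\<^sub>M lborel)"
    by (rule borel_measurable_times_ennreal[OF measurable_compose[OF Wn_meas[OF a3 a1 a2] measurable_ennreal]
         measurable_compose[OF R measurable_of_bool]])
  from lborel.borel_measurable_nn_integral_fst[OF this]
  show ?thesis by (simp only: indicator_def mem_Collect_eq fst_conv snd_conv)
qed

lemma B1_meas:
  assumes a: "a \<in> measurable M borel" and b: "b \<in> measurable M borel" and c: "c \<in> measurable M borel"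
  shows "(\<lambda>z. B1 (a z) (b z) (c z)) \<in> borel_measurable M"
  unfolding B1_def
proof (rule int_meas[OF a b])
  show "Measurable.pred (M \<Otimes>\<^sub>M lborel) (\<lambda>p. pass1 (c (fst p)) (b (fst p)) (snd p))"
    by (rule pass1_meas) (rule measurable_compose[OF measurable_fst c], rule measurable_compose[OF measurable_fst b], measurable)
qed

lemma B2_meas:
  assumes a: "a \<in> measurable M borel" and b: "b \<in> measurable M borel" and c: "c \<in> measurable M borel"
    and d: "d \<in> measurable M borel"
  shows "(\<lambda>z. B2 (a z) (b z) (c z) (d z)) \<in> borel_measurable M"
  unfolding B2_def
proof (rule int_meas[OF a b])
  show "Measurable.pred (M \<Otimes>\<^sub>M lborel) (\<lambda>p. pass2 (c (fst p)) (d (fst p)) (snd p))"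
    by (rule pass2_meas) (rule measurable_compose[OF measurable_fst c], rule measurable_compose[OF measurable_fst d], measurable)
qed

lemma A_meas:
  assumes a: "a \<in> measurable M borel" and b: "b \<in> measurable M borel"
  shows "(\<lambda>z. A (a z) (b z)) \<in> borel_measurable M"
  unfolding A_def
proof (rule int_meas[OF a b])
  have a1: "(\<lambda>p. a (fst p)) \<in> measurable (M \<Otimes>\<^sub>M lborel) borel" by (rule measurable_compose[OF measurable_fst a])
  have a2: "(\<lambda>p. b (fst p)) \<in> measurable (M \<Otimes>\<^sub>M lborel) borel" by (rule measurable_compose[OF measurable_fst b])
  have a3: "snd \<in> measurable (M \<Otimes>\<^sub>M lborel) borel" by measurable
  show "Measurable.pred (M \<Otimes>\<^sub>M lborel) (\<lambda>p. \<not> (pass1 (a (fst p)) (b (fst p)) (snd p) \<and> pass2 (a (fst p)) (b (fst p)) (snd p)))"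
    by (intro pred_intros_logic pass1_meas[OF a1 a2 a3] pass2_meas[OF a1 a2 a3])
qed

lemma N1_bound: "(\<integral>\<^sup>+ x1. ennreal (Wn y x1 x2) \<partial>K x2) \<le> \<Lambda>1 * ennreal (Q1 y x2)"
proof -
  define N where "N = (\<integral>\<^sup>+ x1. ennreal (Wn y x1 x2) \<partial>K x2)"
  have q: "ennreal (Q1 y x2) \<noteq> 0" "ennreal (Q1 y x2) < top" using Q1_pos[of y x2] by auto
  have "N / ennreal (Q1 y x2) \<le> \<Lambda>1"
    unfolding \<Lambda>1_def N_def by (intro SUP_upper2[of x2] SUP_upper) auto
  then have "N / ennreal (Q1 y x2) * ennreal (Q1 y x2) \<le> \<Lambda>1 * ennreal (Q1 y x2)"
    by (rule mult_right_mono) simp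
  moreover have "N / ennreal (Q1 y x2) * ennreal (Q1 y x2) = N"
    using q by (simp add: ennreal_divide_times)
  ultimately show ?thesis by (simp add: N_def)
qed

lemma N12_bound: "(\<integral>\<^sup>+ x. ennreal (Wn y (fst x) (snd x)) \<partial>P) \<le> \<Lambda>12 * ennreal (Q y)"
proof -
  define N where "N = (\<integral>\<^sup>+ x. ennreal (Wn y (fst x) (snd x)) \<partial>P)"
  have q: "ennreal (Q y) \<noteq> 0" "ennreal (Q y) < top" using Q_pos[of y] by auto
  have "N / ennreal (Q y) \<le> \<Lambda>12"
    unfolding \<Lambda>12_def N_def by (intro SUP_upper) auto
  then have "N / ennreal (Q y) * ennreal (Q y) \<le> \<Lambda>12 * ennreal (Q y)"
    by (rule mult_right_mono) simp
  moreover have "N / ennreal (Q y) * ennreal (Q y) = N"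
    using q by (simp add: ennreal_divide_times)
  ultimately show ?thesis by (simp add: N_def)
qed

lemma Wn_pos: "Wn y x1 x2 > 0"
  unfolding Wn_def by (intro prod_pos) (simp add: W_pos)

lemma PB1:
  assumes "pass1 x1 x2 y"
  shows "ennreal (real M1) * ennreal (Q1 y x2) \<le> cc * ennreal (Wn y x1 x2)"
proof -
  have W: "Wn y x1 x2 > 0" by (rule Wn_pos)
  have Q: "Q1 y x2 > 0" by (rule Q1_pos)
  have "exp T1 < exp (ln (Wn y x1 x2 / Q1 y x2))"
    using assms unfolding pass1_def by simp
  also have "\<dots> = Wn y x1 x2 / Q1 y x2" using W Q by simp
  finally have "real M1 * exp (real CARD('n) * \<gamma>) < Wn y x1 x2 / Q1 y x2"
    using M1_pos by (simp add: T1_def exp_add)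
  then have "real M1 * exp (real CARD('n) * \<gamma>) * Q1 y x2 < Wn y x1 x2"
    using Q by (simp add: field_simps)
  then have "exp (- real CARD('n) * \<gamma>) * (real M1 * exp (real CARD('n) * \<gamma>) * Q1 y x2) \<le> exp (- real CARD('n) * \<gamma>) * Wn y x1 x2"
    by simp
  then have "real M1 * Q1 y x2 \<le> exp (- real CARD('n) * \<gamma>) * Wn y x1 x2"
    by (simp add: exp_minus field_simps)
  then have "ennreal (real M1 * Q1 y x2) \<le> ennreal (exp (- real CARD('n) * \<gamma>) * Wn y x1 x2)"
    by (rule ennreal_leI)
  then show ?thesis
    using Q W by (simp add: cc_def ennreal_mult)
qed

lemma PB2:
  assumes "pass2 x1 x2 y"
  shows "ennreal (real M1 * real M2) * ennreal (Q y) \<le> cc * ennreal (Wn y x1 x2)"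
proof -
  have W: "Wn y x1 x2 > 0" by (rule Wn_pos)
  have Q: "Q y > 0" by (rule Q_pos)
  have "exp T2 < exp (ln (Wn y x1 x2 / Q y))"
    using assms unfolding pass2_def by simp
  also have "\<dots> = Wn y x1 x2 / Q y" using W Q by simp
  finally have "real M1 * real M2 * exp (real CARD('n) * \<gamma>) < Wn y x1 x2 / Q y"
    using M1_pos M2_pos by (simp add: T2_def exp_add)
  then have "real M1 * real M2 * exp (real CARD('n) * \<gamma>) * Q y < Wn y x1 x2"
    using Q by (simp add: field_simps)
  then have "exp (- real CARD('n) * \<gamma>) * (real M1 * real M2 * exp (real CARD('n) * \<gamma>) * Q y) \<le> exp (- real CARD('n) * \<gamma>) * Wn y x1 x2"
    by simp
  then have "real M1 * real M2 * Q y \<le> exp (- real CARD('n) * \<gamma>) * Wn y x1 x2"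
    by (simp add: exp_minus field_simps)
  then have "ennreal (real M1 * real M2 * Q y) \<le> ennreal (exp (- real CARD('n) * \<gamma>) * Wn y x1 x2)"
    by (rule ennreal_leI)
  then show ?thesis
    using Q W by (simp add: cc_def ennreal_mult)
qed

end


context mac
begin

lemma K_prob': "prob_space (K x)" by (rule K_prob)

lemma delta_bound: "ennreal (real M1) * (\<integral>\<^sup>+ x1. \<integral>\<^sup>+ x1'. B1 x1 x2 x1' \<partial>K x2 \<partial>K x2) \<le> \<Lambda>1 * cc"
proof -
  have wm: "(\<lambda>(x, y). Wn y x x2) \<in> borel_measurable borel"
    unfolding case_prod_beta' by (rule Wn_meas[OF snd_borel fst_borel]) simp
  have pp: "Measurable.pred borel (\<lambda>(x, y). pass1 x x2 y)"
    unfolding case_prod_beta' by (rule pass1_meas[OF fst_borel _ snd_borel]) simp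
  show ?thesis unfolding B1_def
    by (rule gen_bound[where \<mu>="K x2" and \<nu>="K x2" and w="\<lambda>x1 y. Wn y x1 x2" and pass="\<lambda>x1' y. pass1 x1' x2 y"
        and q="\<lambda>y. Q1 y x2" and \<Lambda>=\<Lambda>1 and cz="ennreal (real M1)" and ce=cc, OF K_prob K_prob sets_K sets_K wm pp])
       (auto intro: less_imp_le[OF Wn_pos] N1_bound PB1 Wn_int)
qed

lemma beta_bound0: "ennreal (real M1 * real M2) *
   (\<integral>\<^sup>+ x. \<integral>\<^sup>+ x'. B2 (fst x) (snd x) (fst x') (snd x') \<partial>P \<partial>P) \<le> \<Lambda>12 * cc"
proof -
  have f1: "(\<lambda>p::((real^'n) \<times> (real^'n)) \<times> (real^'n). fst (fst p)) \<in> borel_measurable borel"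
    by (rule measurable_compose[OF fst_borel fst_borel])
  have f2: "(\<lambda>p::((real^'n) \<times> (real^'n)) \<times> (real^'n). snd (fst p)) \<in> borel_measurable borel"
    by (rule measurable_compose[OF fst_borel snd_borel])
  have wm: "(\<lambda>(x, y). Wn y (fst x) (snd x)) \<in> borel_measurable borel"
    unfolding case_prod_beta' by (intro Wn_meas snd_borel measurable_compose[OF fst_borel fst_borel] measurable_compose[OF fst_borel snd_borel])
  have pp: "Measurable.pred borel (\<lambda>(x, y). pass2 (fst x) (snd x) y)"
    unfolding case_prod_beta' by (intro pass2_meas snd_borel measurable_compose[OF fst_borel fst_borel] measurable_compose[OF fst_borel snd_borel])
  show ?thesis unfolding B2_def
    by (rule gen_bound[where \<mu>=P and \<nu>=P and w="\<lambda>x y. Wn y (fst x) (snd x)" and pass="\<lambda>x' y. pass2 (fst x') (snd x') y"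
        and q=Q and \<Lambda>=\<Lambda>12 and cz="ennreal (real M1 * real M2)" and ce=cc, OF P_prob P_prob P_sets P_sets wm pp])
       (auto intro: less_imp_le[OF Wn_pos] N12_bound PB2 Wn_int)
qed


definition "\<alpha> x2 = (\<integral>\<^sup>+ x1. A x1 x2 \<partial>K x2)"
definition "\<delta> x2 = (\<integral>\<^sup>+ x1. \<integral>\<^sup>+ x1'. B1 x1 x2 x1' \<partial>K x2 \<partial>K x2)"
definition "\<beta> x2 x2' = (\<integral>\<^sup>+ x1. \<integral>\<^sup>+ x1'. B2 x1 x2 x1' x2' \<partial>K x2' \<partial>K x2)"

lemma fstP: "fst \<in> measurable P borel"
  by (simp add: measurable_cong_sets[OF P_sets refl] fst_borel)
lemma sndP: "snd \<in> measurable P borel"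
  by (simp add: measurable_cong_sets[OF P_sets refl] snd_borel)
lemma idPX2: "(\<lambda>x. x) \<in> measurable PX2 borel"
  by (simp add: measurable_cong_sets[OF sets_PX2 refl])
lemma idK: "(\<lambda>x. x) \<in> measurable (K x2) borel"
  by (simp add: measurable_cong_sets[OF sets_K refl])

lemma P_sf: "sigma_finite_measure P"
  using P_prob by (simp add: prob_space_imp_sigma_finite)

lemma beta_eq: "(\<integral>\<^sup>+ x2. \<integral>\<^sup>+ x2'. \<beta> x2 x2' \<partial>PX2 \<partial>PX2) = (\<integral>\<^sup>+ x. \<integral>\<^sup>+ x'. B2 (fst x) (snd x) (fst x') (snd x') \<partial>P \<partial>P)"
proof -
  define H where "H x1 x2 = (\<integral>\<^sup>+ x'. B2 x1 x2 (fst x') (snd x') \<partial>P)" for x1 x2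
  have step: "(\<integral>\<^sup>+ x2'. \<beta> x2 x2' \<partial>PX2) = (\<integral>\<^sup>+ x1. H x1 x2 \<partial>K x2)" for x2
  proof -
    define G where "G x1 x2' = (\<integral>\<^sup>+ x1'. B2 x1 x2 x1' x2' \<partial>K x2')" for x1 x2'
    interpret pair_sigma_finite "K x2" PX2
      using K_prob PX2_prob by (simp add: pair_sigma_finite_def prob_space_imp_sigma_finite)
    have Gm: "(\<lambda>(x1, x2'). G x1 x2') \<in> borel_measurable (K x2 \<Otimes>\<^sub>M PX2)"
    proof -
      have L: "(\<lambda>p. K (snd p)) \<in> measurable (K x2 \<Otimes>\<^sub>M PX2) (subprob_algebra borel)"
        by (rule measurable_compose[OF measurable_snd K_meas'])
      have s1: "(\<lambda>q. fst (fst q)) \<in> measurable ((K x2 \<Otimes>\<^sub>M PX2) \<Otimes>\<^sub>M borel) borel"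
        by (rule measurable_compose[OF measurable_fst measurable_compose[OF measurable_fst idK]])
      have s2: "(\<lambda>q. snd (fst q)) \<in> measurable ((K x2 \<Otimes>\<^sub>M PX2) \<Otimes>\<^sub>M borel) borel"
        by (rule measurable_compose[OF measurable_fst measurable_compose[OF measurable_snd idPX2]])
      have s3: "snd \<in> measurable ((K x2 \<Otimes>\<^sub>M PX2) \<Otimes>\<^sub>M borel) borel"
        by (rule measurable_snd)
      have "(\<lambda>q. B2 (fst (fst q)) x2 (snd q) (snd (fst q))) \<in> borel_measurable ((K x2 \<Otimes>\<^sub>M PX2) \<Otimes>\<^sub>M borel)"
        by (rule B2_meas[OF s1 _ s3 s2]) simp
      then have "(\<lambda>(p, x1'). B2 (fst p) x2 x1' (snd p)) \<in> borel_measurable ((K x2 \<Otimes>\<^sub>M PX2) \<Otimes>\<^sub>M borel)"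
        by (simp only: case_prod_beta')
      from nn_integral_measurable_subprob_algebra2[OF this L]
      show ?thesis unfolding G_def by (simp only: case_prod_beta')
    qed
    have "(\<integral>\<^sup>+ x2'. \<beta> x2 x2' \<partial>PX2) = (\<integral>\<^sup>+ x2'. \<integral>\<^sup>+ x1. G x1 x2' \<partial>K x2 \<partial>PX2)"
      unfolding \<beta>_def G_def ..
    also have "\<dots> = (\<integral>\<^sup>+ x1. \<integral>\<^sup>+ x2'. G x1 x2' \<partial>PX2 \<partial>K x2)"
      by (rule Fubini'[OF Gm])
    also have "\<dots> = (\<integral>\<^sup>+ x1. H x1 x2 \<partial>K x2)"
    proof (rule nn_integral_cong)
      fix x1
      have hm: "(\<lambda>x'. B2 x1 x2 (fst x') (snd x')) \<in> borel_measurable borel"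
        by (rule B2_meas[OF _ _ fst_borel snd_borel]) simp_all
      show "(\<integral>\<^sup>+ x2'. G x1 x2' \<partial>PX2) = H x1 x2"
        unfolding H_def G_def by (subst P_disint[OF hm]) simp
    qed
    finally show ?thesis .
  qed
  have Hm: "(\<lambda>x. H (fst x) (snd x)) \<in> borel_measurable borel"
  proof -
    interpret P: sigma_finite_measure P by (rule P_sf)
    have s1: "(\<lambda>q::((real^'n) \<times> (real^'n)) \<times> ((real^'n) \<times> (real^'n)). fst (fst q)) \<in> measurable (borel \<Otimes>\<^sub>M P) borel"
      by (rule measurable_compose[OF measurable_fst fst_borel])
    have s2: "(\<lambda>q::((real^'n) \<times> (real^'n)) \<times> ((real^'n) \<times> (real^'n)). snd (fst q)) \<in> measurable (borel \<Otimes>\<^sub>M P) borel"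
      by (rule measurable_compose[OF measurable_fst snd_borel])
    have s3: "(\<lambda>q::((real^'n) \<times> (real^'n)) \<times> ((real^'n) \<times> (real^'n)). fst (snd q)) \<in> measurable (borel \<Otimes>\<^sub>M P) borel"
      by (rule measurable_compose[OF measurable_snd fstP])
    have s4: "(\<lambda>q::((real^'n) \<times> (real^'n)) \<times> ((real^'n) \<times> (real^'n)). snd (snd q)) \<in> measurable (borel \<Otimes>\<^sub>M P) borel"
      by (rule measurable_compose[OF measurable_snd sndP])
    have "(\<lambda>q. B2 (fst (fst q)) (snd (fst q)) (fst (snd q)) (snd (snd q))) \<in> borel_measurable (borel \<Otimes>\<^sub>M P)"
      by (rule B2_meas[OF s1 s2 s3 s4])
    then have "(\<lambda>(x, x'). B2 (fst x) (snd x) (fst x') (snd x')) \<in> borel_measurable (borel \<Otimes>\<^sub>M P)"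
      by (simp only: case_prod_beta')
    from P.borel_measurable_nn_integral[OF this] show ?thesis unfolding H_def .
  qed
  have "(\<integral>\<^sup>+ x2. \<integral>\<^sup>+ x2'. \<beta> x2 x2' \<partial>PX2 \<partial>PX2) = (\<integral>\<^sup>+ x2. \<integral>\<^sup>+ x1. H x1 x2 \<partial>K x2 \<partial>PX2)"
    by (simp only: step)
  also have "\<dots> = (\<integral>\<^sup>+ x. H (fst x) (snd x) \<partial>P)"
    by (subst P_disint[OF Hm]) simp
  finally show ?thesis unfolding H_def .
qed


lemma alpha_meas: "\<alpha> \<in> borel_measurable PX2"
proof -
  have "(\<lambda>p. A (snd p) (fst p)) \<in> borel_measurable (PX2 \<Otimes>\<^sub>M borel)"
    by (rule A_meas[OF measurable_snd measurable_compose[OF measurable_fst idPX2]])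
  then have "(\<lambda>(x2, x1). A x1 x2) \<in> borel_measurable (PX2 \<Otimes>\<^sub>M borel)"
    by (simp only: case_prod_beta')
  from nn_integral_measurable_subprob_algebra2[OF this K_meas'] show ?thesis
    unfolding \<alpha>_def[abs_def] .
qed

lemma delta_meas: "\<delta> \<in> borel_measurable PX2"
proof -
  define I where "I x2 x1 = (\<integral>\<^sup>+ x1'. B1 x1 x2 x1' \<partial>K x2)" for x2 x1
  have Im: "(\<lambda>(x2, x1). I x2 x1) \<in> borel_measurable (PX2 \<Otimes>\<^sub>M borel)"
  proof -
    have L: "(\<lambda>p. K (fst p)) \<in> measurable (PX2 \<Otimes>\<^sub>M borel) (subprob_algebra borel)"
      by (rule measurable_compose[OF measurable_fst K_meas'])
    have s1: "(\<lambda>q. snd (fst q)) \<in> measurable ((PX2 \<Otimes>\<^sub>M borel) \<Otimes>\<^sub>M borel) borel"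
      by (rule measurable_compose[OF measurable_fst measurable_snd])
    have s2: "(\<lambda>q. fst (fst q)) \<in> measurable ((PX2 \<Otimes>\<^sub>M borel) \<Otimes>\<^sub>M borel) borel"
      by (rule measurable_compose[OF measurable_fst measurable_compose[OF measurable_fst idPX2]])
    have "(\<lambda>q. B1 (snd (fst q)) (fst (fst q)) (snd q)) \<in> borel_measurable ((PX2 \<Otimes>\<^sub>M borel) \<Otimes>\<^sub>M borel)"
      by (rule B1_meas[OF s1 s2 measurable_snd])
    then have "(\<lambda>(p, x1'). B1 (snd p) (fst p) x1') \<in> borel_measurable ((PX2 \<Otimes>\<^sub>M borel) \<Otimes>\<^sub>M borel)"
      by (simp only: case_prod_beta')
    from nn_integral_measurable_subprob_algebra2[OF this L]
    show ?thesis unfolding I_def by (simp only: case_prod_beta')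
  qed
  from nn_integral_measurable_subprob_algebra2[OF Im K_meas'] show ?thesis
    unfolding \<delta>_def[abs_def] I_def .
qed

lemma beta_meas: "(\<lambda>(x2, x2'). \<beta> x2 x2') \<in> borel_measurable (PX2 \<Otimes>\<^sub>M PX2)"
proof -
  define I where "I p x1 = (\<integral>\<^sup>+ x1'. B2 x1 (fst p) x1' (snd p) \<partial>K (snd p))" for p :: "(real^'n) \<times> (real^'n)" and x1
  have Im: "(\<lambda>(p, x1). I p x1) \<in> borel_measurable ((PX2 \<Otimes>\<^sub>M PX2) \<Otimes>\<^sub>M borel)"
  proof -
    have L: "(\<lambda>q. K (snd (fst q))) \<in> measurable ((PX2 \<Otimes>\<^sub>M PX2) \<Otimes>\<^sub>M borel) (subprob_algebra borel)"
      by (rule measurable_compose[OF measurable_compose[OF measurable_fst measurable_snd] K_meas'])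
    have s1: "(\<lambda>r. snd (fst r)) \<in> measurable (((PX2 \<Otimes>\<^sub>M PX2) \<Otimes>\<^sub>M borel) \<Otimes>\<^sub>M borel) borel"
      by (rule measurable_compose[OF measurable_fst measurable_snd])
    have s2: "(\<lambda>r. fst (fst (fst r))) \<in> measurable (((PX2 \<Otimes>\<^sub>M PX2) \<Otimes>\<^sub>M borel) \<Otimes>\<^sub>M borel) borel"
      by (rule measurable_compose[OF measurable_fst measurable_compose[OF measurable_fst measurable_compose[OF measurable_fst idPX2]]])
    have s3: "(\<lambda>r. snd (fst (fst r))) \<in> measurable (((PX2 \<Otimes>\<^sub>M PX2) \<Otimes>\<^sub>M borel) \<Otimes>\<^sub>M borel) borel"
      by (rule measurable_compose[OF measurable_fst measurable_compose[OF measurable_fst measurable_compose[OF measurable_snd idPX2]]])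
    have "(\<lambda>r. B2 (snd (fst r)) (fst (fst (fst r))) (snd r) (snd (fst (fst r)))) \<in> borel_measurable (((PX2 \<Otimes>\<^sub>M PX2) \<Otimes>\<^sub>M borel) \<Otimes>\<^sub>M borel)"
      by (rule B2_meas[OF s1 s2 measurable_snd s3])
    then have "(\<lambda>(q, x1'). B2 (snd q) (fst (fst q)) x1' (snd (fst q))) \<in> borel_measurable (((PX2 \<Otimes>\<^sub>M PX2) \<Otimes>\<^sub>M borel) \<Otimes>\<^sub>M borel)"
      by (simp only: case_prod_beta')
    from nn_integral_measurable_subprob_algebra2[OF this L]
    show ?thesis unfolding I_def by (simp only: case_prod_beta')
  qed
  have L2: "(\<lambda>p. K (fst p)) \<in> measurable (PX2 \<Otimes>\<^sub>M PX2) (subprob_algebra borel)"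
    by (rule measurable_compose[OF measurable_fst K_meas'])
  from nn_integral_measurable_subprob_algebra2[OF Im L2] show ?thesis
    unfolding \<beta>_def I_def by (simp only: case_prod_beta')
qed


definition "FG = {((x1, x2), y).
           (1 / real CARD('n)) * ln (Wn y x1 x2 / Q1 y x2)
              \<le> (1 / real CARD('n)) * ln (real M1) + \<gamma>
         \<or> (1 / real CARD('n)) * ln (Wn y x1 x2 / Q y)
              \<le> (1 / real CARD('n)) * ln (real M1 * real M2) + \<gamma>}"

lemma scale_le: "((1 / real CARD('n)) * a \<le> (1 / real CARD('n)) * b + \<gamma>) \<longleftrightarrow> a \<le> b + real CARD('n) * \<gamma>"
proof -
  have n: "real CARD('n) > 0" by simp
  have "((1 / real CARD('n)) * a \<le> (1 / real CARD('n)) * b + \<gamma>) \<longleftrightarrow>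
        real CARD('n) * ((1 / real CARD('n)) * a) \<le> real CARD('n) * ((1 / real CARD('n)) * b + \<gamma>)"
    using n by (simp only: mult_le_cancel_left_pos)
  also have "\<dots> \<longleftrightarrow> a \<le> b + real CARD('n) * \<gamma>"
    using n by (simp add: algebra_simps)
  finally show ?thesis .
qed

lemma FG_eq: "FG = {p. \<not> (pass1 (fst (fst p)) (snd (fst p)) (snd p) \<and> pass2 (fst (fst p)) (snd (fst p)) (snd p))}"
proof -
  have e: "\<And>a b. (a / real CARD('n) \<le> b / real CARD('n) + \<gamma>) \<longleftrightarrow> a \<le> b + real CARD('n) * \<gamma>"
    using scale_le by simp
  show ?thesis
    unfolding FG_def pass1_def pass2_def T1_def T2_def by (auto simp: e not_less)
qed

lemma FG_sets: "FG \<in> sets borel"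
proof -
  have f1: "(\<lambda>p::((real^'n) \<times> (real^'n)) \<times> (real^'n). fst (fst p)) \<in> borel_measurable borel"
    by (rule measurable_compose[OF fst_borel fst_borel])
  have f2: "(\<lambda>p::((real^'n) \<times> (real^'n)) \<times> (real^'n). snd (fst p)) \<in> borel_measurable borel"
    by (rule measurable_compose[OF fst_borel snd_borel])
  have "Measurable.pred borel (\<lambda>p::((real^'n) \<times> (real^'n)) \<times> (real^'n). \<not> (pass1 (fst (fst p)) (snd (fst p)) (snd p) \<and> pass2 (fst (fst p)) (snd (fst p)) (snd p)))"
    by (intro pred_intros_logic pass1_meas[OF f1 f2 snd_borel] pass2_meas[OF f1 f2 snd_borel])
  then show ?thesis unfolding FG_eq pred_def by simp
qed

lemma Pair_meas: "(\<lambda>y. (x, y)) \<in> measurable borel (borel :: (('a::second_countable_topology) \<times> ('b::second_countable_topology)) measure)"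
  by (subst borel_prod[symmetric]) (intro measurable_Pair measurable_const measurable_ident_sets; simp)

lemma JK: "(\<lambda>x. distr (chan (fst x) (snd x)) borel (\<lambda>y. (x, y))) \<in> measurable P (subprob_algebra borel)"
proof (rule measurable_distr2[where M="borel :: (real^'n) measure"])
  have H: "(\<lambda>p. p) \<in> measurable (P \<Otimes>\<^sub>M borel) (borel \<Otimes>\<^sub>M (borel :: (real^'n) measure))"
    by (simp add: measurable_cong_sets[OF sets_pair_measure_cong[OF P_sets refl] refl])
  show "(\<lambda>(x, y::real^'n). (x, y)) \<in> measurable (P \<Otimes>\<^sub>M borel) borel"
    unfolding case_prod_Pair id_def
    by (rule measurable_ident_sets, rule trans[OF sets_pair_measure_cong[OF P_sets refl] sets_borel_prod[symmetric]])
  show "(\<lambda>x. chan (fst x) (snd x)) \<in> measurable P (subprob_algebra borel)"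
    by (rule chan_kernel[OF fstP sndP])
qed

lemma joint_prob: "prob_space (joint_XY P)"
  unfolding joint_XY_def
proof (rule prob_space.prob_space_bind[OF P_prob _ JK])
  show "AE x in P. prob_space (distr (chan (fst x) (snd x)) borel (\<lambda>y. (x, y)))"
    by (intro AE_I2 prob_space.prob_space_distr prob_chan) (simp add: Pair_meas measurable_cong_sets[OF sets_chan refl])
qed

lemma joint_emeasure:
  assumes S: "S \<in> sets borel"
  shows "emeasure (joint_XY P) S = (\<integral>\<^sup>+ x. \<integral>\<^sup>+ y. ennreal (Wn y (fst x) (snd x)) * indicator (Pair x -` S) y \<partial>lborel \<partial>P)"
proof -
  have sp: "space P \<noteq> {}" by simp
  have "emeasure (joint_XY P) S = (\<integral>\<^sup>+ x. emeasure (distr (chan (fst x) (snd x)) borel (\<lambda>y. (x, y))) S \<partial>P)"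
    unfolding joint_XY_def by (rule emeasure_bind[OF sp JK S])
  also have "\<dots> = (\<integral>\<^sup>+ x. \<integral>\<^sup>+ y. ennreal (Wn y (fst x) (snd x)) * indicator (Pair x -` S) y \<partial>lborel \<partial>P)"
  proof (rule nn_integral_cong)
    fix x :: "(real^'n) \<times> (real^'n)"
    have m: "(\<lambda>y. (x, y)) \<in> measurable (chan (fst x) (snd x)) borel"
      by (simp add: Pair_meas measurable_cong_sets[OF sets_chan refl])
    have m2: "(\<lambda>y::real^'n. (x, y)) \<in> measurable borel borel" by (rule Pair_meas)
    have "Pair x -` S \<in> sets borel"
      using measurable_sets[OF m2 S] by simp
    then show "emeasure (distr (chan (fst x) (snd x)) borel (\<lambda>y. (x, y))) S =
       (\<integral>\<^sup>+ y. ennreal (Wn y (fst x) (snd x)) * indicator (Pair x -` S) y \<partial>lborel)"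
      by (simp add: emeasure_distr[OF m S] emeasure_chan)
  qed
  finally show ?thesis .
qed

lemma alpha_joint: "(\<integral>\<^sup>+ x2. \<alpha> x2 \<partial>PX2) = emeasure (joint_XY P) FG"
proof -
  have Am: "(\<lambda>x. A (fst x) (snd x)) \<in> borel_measurable borel"
    by (rule A_meas[OF fst_borel snd_borel])
  have "(\<integral>\<^sup>+ x2. \<alpha> x2 \<partial>PX2) = (\<integral>\<^sup>+ x. A (fst x) (snd x) \<partial>P)"
    unfolding \<alpha>_def by (subst P_disint[OF Am]) simp
  also have "\<dots> = emeasure (joint_XY P) FG"
    unfolding joint_emeasure[OF FG_sets] A_def
    by (intro nn_integral_cong) (simp add: FG_eq vimage_def)
  finally show ?thesis .
qed

end


lemma diff_split:
  fixes M1 M2 m1 m2 :: nat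
  assumes "m1 < M1" "m2 < M2"
  shows "({..<M1} \<times> {..<M2}) - {(m1, m2)} = (({..<M1} - {m1}) \<times> {m2}) \<union> ({..<M1} \<times> ({..<M2} - {m2}))"
  using assms by auto

lemma inner_sum:
  fixes d :: "nat \<Rightarrow> ennreal" and b :: "nat \<Rightarrow> nat \<Rightarrow> ennreal" and M1 M2 m1 m2 :: nat
  assumes "m1 < M1" "m2 < M2"
  shows "(\<Sum>t\<in>({..<M1} \<times> {..<M2}) - {(m1, m2)}. (if m2 = snd t then d m2 else b m2 (snd t)))
    = (\<Sum>m1'\<in>{..<M1} - {m1}. d m2) + (\<Sum>m2'\<in>{..<M2} - {m2}. \<Sum>m1'<M1. b m2 m2')"
proof -
  have disj: "(({..<M1} - {m1}) \<times> {m2}) \<inter> ({..<M1} \<times> ({..<M2} - {m2})) = {}" by auto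
  have "(\<Sum>t\<in>({..<M1} \<times> {..<M2}) - {(m1, m2)}. (if m2 = snd t then d m2 else b m2 (snd t)))
     = (\<Sum>t\<in>({..<M1} - {m1}) \<times> {m2}. (if m2 = snd t then d m2 else b m2 (snd t)))
     + (\<Sum>t\<in>{..<M1} \<times> ({..<M2} - {m2}). (if m2 = snd t then d m2 else b m2 (snd t)))"
    unfolding diff_split[OF assms] by (rule sum.union_disjoint) (auto intro!: finite_cartesian_product simp: disj)
  also have "(\<Sum>t\<in>({..<M1} - {m1}) \<times> {m2}. (if m2 = snd t then d m2 else b m2 (snd t))) = (\<Sum>m1'\<in>{..<M1} - {m1}. d m2)"
    by (simp add: sum.cartesian_product')
  also have "(\<Sum>t\<in>{..<M1} \<times> ({..<M2} - {m2}). (if m2 = snd t then d m2 else b m2 (snd t)))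
      = (\<Sum>m1'<M1. \<Sum>m2'\<in>{..<M2} - {m2}. b m2 m2')"
    unfolding sum.cartesian_product' by (intro sum.cong refl) auto
  also have "\<dots> = (\<Sum>m2'\<in>{..<M2} - {m2}. \<Sum>m1'<M1. b m2 m2')"
    by (rule sum.swap)
  finally show ?thesis .
qed

lemma sum_identity:
  fixes a d :: "nat \<Rightarrow> ennreal" and b :: "nat \<Rightarrow> nat \<Rightarrow> ennreal" and M1 M2 :: nat
  shows "(\<Sum>s\<in>{..<M1} \<times> {..<M2}. a (snd s)) + (\<Sum>s\<in>{..<M1} \<times> {..<M2}. \<Sum>t\<in>({..<M1} \<times> {..<M2}) - {s}. (if snd s = snd t then d (snd s) else b (snd s) (snd t)))
   = (\<Sum>m2<M2. (\<Sum>m1<M1. a m2) + (\<Sum>m1<M1. \<Sum>m1'\<in>{..<M1} - {m1}. d m2))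
     + (\<Sum>m2<M2. \<Sum>m2'\<in>{..<M2} - {m2}. \<Sum>m1<M1. \<Sum>m1'<M1. b m2 m2')"
proof -
  have e1: "(\<Sum>s\<in>{..<M1} \<times> {..<M2}. a (snd s)) = (\<Sum>m2<M2. \<Sum>m1<M1. a m2)"
  proof -
    have "(\<Sum>s\<in>{..<M1} \<times> {..<M2}. a (snd s)) = (\<Sum>m1<M1. \<Sum>m2<M2. a m2)"
      by (simp only: sum.cartesian_product' snd_conv)
    then show ?thesis by (simp only: sum.swap[of _ "{..<M1}"])
  qed
  have e2: "(\<Sum>s\<in>{..<M1} \<times> {..<M2}. \<Sum>t\<in>({..<M1} \<times> {..<M2}) - {s}. (if snd s = snd t then d (snd s) else b (snd s) (snd t)))
      = (\<Sum>m1<M1. \<Sum>m2<M2. (\<Sum>m1'\<in>{..<M1} - {m1}. d m2) + (\<Sum>m2'\<in>{..<M2} - {m2}. \<Sum>m1'<M1. b m2 m2'))"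
    unfolding sum.cartesian_product'
    by (intro sum.cong refl, simp only: snd_conv, rule inner_sum) auto
  also have "\<dots> = (\<Sum>m2<M2. \<Sum>m1<M1. (\<Sum>m1'\<in>{..<M1} - {m1}. d m2) + (\<Sum>m2'\<in>{..<M2} - {m2}. \<Sum>m1'<M1. b m2 m2'))"
    by (rule sum.swap)
  also have "\<dots> = (\<Sum>m2<M2. \<Sum>m1<M1. \<Sum>m1'\<in>{..<M1} - {m1}. d m2) + (\<Sum>m2<M2. \<Sum>m2'\<in>{..<M2} - {m2}. \<Sum>m1<M1. \<Sum>m1'<M1. b m2 m2')"
    by (simp add: sum.distrib distrib_left sum_distrib_left)
  finally show ?thesis unfolding e1 by (simp add: sum.distrib algebra_simps)
qed


lemma decoder:
  fixes pa :: "'i::countable \<Rightarrow> 'y \<Rightarrow> bool" and I :: "'i set"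
  assumes fin: "finite I" and d: "d \<in> I" and pm: "\<And>t. Measurable.pred M (pa t)"
  defines "dec \<equiv> (\<lambda>y. if \<exists>!t. t \<in> I \<and> pa t y then THE t. t \<in> I \<and> pa t y else d)"
  shows "dec \<in> measurable M (count_space UNIV)"
    and "\<And>y. dec y \<in> I"
    and "\<And>s y. s \<in> I \<Longrightarrow> dec y \<noteq> s \<Longrightarrow> \<not> pa s y \<or> (\<exists>t\<in>I-{s}. pa t y)"
proof -
  define U where "U y \<longleftrightarrow> (\<exists>t\<in>I. pa t y \<and> (\<forall>t'\<in>I. pa t' y \<longrightarrow> t' = t))" for y
  have U_eq: "U y \<longleftrightarrow> (\<exists>!t. t \<in> I \<and> pa t y)" for y
    unfolding U_def by blast
  have Um: "Measurable.pred M U"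
    unfolding U_def
    by (intro pred_intros_logic pred_intros_finite(3,4) fin pm) (simp_all add: pred_def)
  have dec_eq: "dec y = a \<longleftrightarrow> (U y \<and> a \<in> I \<and> pa a y) \<or> (\<not> U y \<and> a = d)" for y a
  proof (cases "U y")
    case True
    then obtain t where t: "t \<in> I" "pa t y" "\<forall>t'\<in>I. pa t' y \<longrightarrow> t' = t" unfolding U_def by blast
    have th: "(THE t'. t' \<in> I \<and> pa t' y) = t"
      by (rule the_equality) (use t in blast)+
    have "dec y = t" unfolding dec_def using U_eq[of y] True th by simp
    then show ?thesis using True t by blast
  next
    case False
    then show ?thesis unfolding dec_def using U_eq[of y] by (simp add: eq_commute)
  qed
  show "dec \<in> measurable M (count_space UNIV)"
    unfolding measurable_count_space_eq2_countable
  proof (intro conjI ballI)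
    fix a :: 'i
    have "Measurable.pred M (\<lambda>y. (U y \<and> a \<in> I \<and> pa a y) \<or> (\<not> U y \<and> a = d))"
      by (intro pred_intros_logic Um pm) (simp_all add: pred_def)
    then have "{y \<in> space M. dec y = a} \<in> sets M"
      unfolding dec_eq pred_def .
    moreover have "dec -` {a} \<inter> space M = {y \<in> space M. dec y = a}" by auto
    ultimately show "dec -` {a} \<inter> space M \<in> sets M" by simp
  qed simp
  show "dec y \<in> I" for y
  proof (cases "\<exists>!t. t \<in> I \<and> pa t y")
    case True
    then show ?thesis unfolding dec_def using theI'[OF True] by simp
  qed (use d dec_def in simp)
  show "\<not> pa s y \<or> (\<exists>t\<in>I-{s}. pa t y)" if "s \<in> I" "dec y \<noteq> s" for s y
  proof (rule ccontr)
    assume "\<not> (\<not> pa s y \<or> (\<exists>t\<in>I-{s}. pa t y))"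
    then have "pa s y" "\<forall>t\<in>I-{s}. \<not> pa t y" by auto
    then have "U y" unfolding U_def using that by blast
    then have "dec y = s" using dec_eq[of y s] \<open>pa s y\<close> that by simp
    with that show False by simp
  qed
qed


context mac
begin

definition "I1 = {..<M1} \<times> {..<M2}"
definition "gg x2s s t x1 x1' = (if snd s = snd t then B1 x1 (x2s (snd s)) x1' else B2 x1 (x2s (snd s)) x1' (x2s (snd t)))"
definition "pa x1s x2s t y \<longleftrightarrow> pass1 (x1s t) (x2s (snd t)) y \<and> pass2 (x1s t) (x2s (snd t)) y"

lemma pass1_sets: "{y. pass1 a b y} \<in> sets borel"
proof -
  have "Measurable.pred borel (\<lambda>y. pass1 a b y)"
    by (rule pass1_meas[OF measurable_const measurable_const measurable_ident_sets]) simp_all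
  then show ?thesis unfolding pred_def by simp
qed

lemma pass2_sets: "{y. pass2 a b y} \<in> sets borel"
proof -
  have "Measurable.pred borel (\<lambda>y. pass2 a b y)"
    by (rule pass2_meas[OF measurable_const measurable_const measurable_ident_sets]) simp_all
  then show ?thesis unfolding pred_def by simp
qed

lemma pa_meas: "Measurable.pred borel (pa x1s x2s t)"
proof -
  have "{y. pa x1s x2s t y} = {y. pass1 (x1s t) (x2s (snd t)) y} \<inter> {y. pass2 (x1s t) (x2s (snd t)) y}"
    unfolding pa_def by auto
  then have "{y. pa x1s x2s t y} \<in> sets borel" using pass1_sets pass2_sets by simp
  then show ?thesis unfolding pred_def by simp
qed

lemma msg_bound:
  assumes s: "s \<in> I1"
    and dec: "\<And>y. dec y \<noteq> s \<Longrightarrow> \<not> pa x1s x2s s y \<or> (\<exists>t\<in>I1-{s}. pa x1s x2s t y)"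
  shows "emeasure (chan (x1s s) (x2s (snd s))) {y. dec y \<noteq> s}
    \<le> A (x1s s) (x2s (snd s)) + (\<Sum>t\<in>I1-{s}. gg x2s s t (x1s s) (x1s t))"
proof -
  define ch where "ch = chan (x1s s) (x2s (snd s))"
  have finI: "finite (I1 - {s})" unfolding I1_def by simp
  have pas: "{y. pa x1s x2s t y} \<in> sets borel" for t
    using pa_meas[of x1s x2s t] unfolding pred_def by simp
  have npas: "{y. \<not> pa x1s x2s s y} \<in> sets borel"
    using pas[of s] by (simp add: Compl_eq[symmetric] Collect_neg_eq)
  have "emeasure ch {y. dec y \<noteq> s} \<le> emeasure ch ({y. \<not> pa x1s x2s s y} \<union> (\<Union>t\<in>I1-{s}. {y. pa x1s x2s t y}))"
    by (rule emeasure_mono) (use dec pas npas finI in \<open>auto simp: ch_def\<close>)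
  also have "\<dots> \<le> emeasure ch {y. \<not> pa x1s x2s s y} + emeasure ch (\<Union>t\<in>I1-{s}. {y. pa x1s x2s t y})"
    by (rule emeasure_subadditive) (use pas npas finI in \<open>auto simp: ch_def\<close>)
  also have "\<dots> \<le> emeasure ch {y. \<not> pa x1s x2s s y} + (\<Sum>t\<in>I1-{s}. emeasure ch {y. pa x1s x2s t y})"
    by (intro add_left_mono emeasure_subadditive_finite finI) (use pas in \<open>auto simp: ch_def\<close>)
  also have "\<dots> \<le> A (x1s s) (x2s (snd s)) + (\<Sum>t\<in>I1-{s}. gg x2s s t (x1s s) (x1s t))"
  proof (intro add_mono sum_mono)
    show "emeasure ch {y. \<not> pa x1s x2s s y} \<le> A (x1s s) (x2s (snd s))"
      unfolding ch_def A_def using npas by (simp add: emeasure_chan pa_def)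
  next
    fix t assume t: "t \<in> I1 - {s}"
    show "emeasure ch {y. pa x1s x2s t y} \<le> gg x2s s t (x1s s) (x1s t)"
    proof (cases "snd s = snd t")
      case True
      have "emeasure ch {y. pa x1s x2s t y} \<le> emeasure ch {y. pass1 (x1s t) (x2s (snd s)) y}"
        by (rule emeasure_mono) (use True pass1_sets in \<open>auto simp: pa_def ch_def\<close>)
      also have "\<dots> = gg x2s s t (x1s s) (x1s t)"
        unfolding ch_def gg_def B1_def using True pass1_sets by (simp add: emeasure_chan)
      finally show ?thesis .
    next
      case False
      have "emeasure ch {y. pa x1s x2s t y} \<le> emeasure ch {y. pass2 (x1s t) (x2s (snd t)) y}"
        by (rule emeasure_mono) (use pass2_sets in \<open>auto simp: pa_def ch_def\<close>)
      also have "\<dots> = gg x2s s t (x1s s) (x1s t)"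
        unfolding ch_def gg_def B2_def using False pass2_sets by (simp add: emeasure_chan)
      finally show ?thesis .
    qed
  qed
  finally show ?thesis unfolding ch_def .
qed

end


lemma arith_bound:
  fixes pr D Bt L1 L2 :: ennreal and m1 m2 :: nat
  assumes hD: "of_nat m1 * D \<le> L1" and hB: "of_nat m1 * of_nat m2 * Bt \<le> L2"
  shows "of_nat m2 * (of_nat m1 * pr + of_nat m1 * (of_nat (m1 - 1) * D)) + of_nat m2 * (of_nat (m2 - 1) * (of_nat m1 * (of_nat m1 * Bt)))
    \<le> of_nat m1 * of_nat m2 * (pr + L1 + L2)"
proof -
  have t2: "of_nat m2 * (of_nat m1 * (of_nat (m1 - 1) * D)) \<le> of_nat m1 * of_nat m2 * L1"
  proof -
    have "of_nat (m1 - 1) * D \<le> (of_nat m1 :: ennreal) * D"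
      by (intro mult_right_mono) simp_all
    also have "\<dots> \<le> L1" by (rule hD)
    finally have "of_nat m2 * (of_nat m1 * (of_nat (m1 - 1) * D)) \<le> of_nat m2 * (of_nat m1 * L1)"
      by (intro mult_left_mono) simp_all
    then show ?thesis by (simp add: ac_simps)
  qed
  have t3: "of_nat m2 * (of_nat (m2 - 1) * (of_nat m1 * (of_nat m1 * Bt))) \<le> of_nat m1 * of_nat m2 * L2"
  proof -
    have "of_nat (m2 - 1) * (of_nat m1 * (of_nat m1 * Bt)) \<le> (of_nat m2 :: ennreal) * (of_nat m1 * (of_nat m1 * Bt))"
      by (intro mult_right_mono) simp_all
    also have "\<dots> = of_nat m1 * (of_nat m1 * of_nat m2 * Bt)" by (simp add: ac_simps)
    also have "\<dots> \<le> of_nat m1 * L2" by (intro mult_left_mono hB) simp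
    finally have "of_nat m2 * (of_nat (m2 - 1) * (of_nat m1 * (of_nat m1 * Bt))) \<le> of_nat m2 * (of_nat m1 * L2)"
      by (intro mult_left_mono) simp_all
    then show ?thesis by (simp add: ac_simps)
  qed
  have "of_nat m2 * (of_nat m1 * pr + of_nat m1 * (of_nat (m1 - 1) * D)) + of_nat m2 * (of_nat (m2 - 1) * (of_nat m1 * (of_nat m1 * Bt)))
     = of_nat m1 * of_nat m2 * pr + of_nat m2 * (of_nat m1 * (of_nat (m1 - 1) * D)) + of_nat m2 * (of_nat (m2 - 1) * (of_nat m1 * (of_nat m1 * Bt)))"
    by (simp add: distrib_left ac_simps)
  also have "\<dots> \<le> of_nat m1 * of_nat m2 * pr + of_nat m1 * of_nat m2 * L1 + of_nat m1 * of_nat m2 * L2"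
    by (intro add_mono t2 t3 order_refl)
  also have "\<dots> = of_nat m1 * of_nat m2 * (pr + L1 + L2)"
    by (simp add: distrib_left)
  finally show ?thesis .
qed

context mac
begin

definition "F1 x2 = (\<Sum>m1<M1. \<alpha> x2) + (\<Sum>m1<M1. \<Sum>m1'\<in>{..<M1}-{m1}. \<delta> x2)"
definition "G1 x2 x2' = (\<Sum>m1<M1. \<Sum>m1'<M1. \<beta> x2 x2')"

lemma stage2:
  fixes x2s :: "nat \<Rightarrow> real^'n" and Pw :: "real^'n \<Rightarrow> real^'n \<Rightarrow> bool"
  assumes good: "\<And>m2. m2 < M2 \<Longrightarrow> AE x1 in K (x2s m2). Pw x1 (x2s m2)"
  shows "\<exists>x1s. (\<forall>s\<in>I1. Pw (x1s s) (x2s (snd s))) \<and>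
   (\<Sum>s\<in>I1. A (x1s s) (x2s (snd s))) + (\<Sum>s\<in>I1. \<Sum>t\<in>I1-{s}. gg x2s s t (x1s s) (x1s t))
   \<le> (\<Sum>m2<M2. F1 (x2s m2)) + (\<Sum>m2<M2. \<Sum>m2'\<in>{..<M2}-{m2}. G1 (x2s m2) (x2s m2'))"
proof -
  have fin: "finite I1" unfolding I1_def by simp
  have fm: "(\<lambda>x. A x (x2s (snd s))) \<in> borel_measurable (K (x2s (snd s)))" for s
    by (rule A_meas[OF idK measurable_const]) simp
  have gm: "(\<lambda>(x, y). gg x2s i j x y) \<in> borel_measurable (K (x2s (snd i)) \<Otimes>\<^sub>M K (x2s (snd j)))" for i j
  proof -
    have a1: "fst \<in> measurable (K (x2s (snd i)) \<Otimes>\<^sub>M K (x2s (snd j))) borel"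
      by (rule measurable_compose[OF measurable_fst idK])
    have a2: "snd \<in> measurable (K (x2s (snd i)) \<Otimes>\<^sub>M K (x2s (snd j))) borel"
      by (rule measurable_compose[OF measurable_snd idK])
    have "(\<lambda>p. gg x2s i j (fst p) (snd p)) \<in> borel_measurable (K (x2s (snd i)) \<Otimes>\<^sub>M K (x2s (snd j)))"
    proof (cases "snd i = snd j")
      case True
      have eq: "(\<lambda>p. gg x2s i j (fst p) (snd p)) = (\<lambda>p. B1 (fst p) (x2s (snd i)) (snd p))"
        using True by (simp add: gg_def)
      show ?thesis unfolding eq by (rule B1_meas[OF a1 _ a2]) simp
    next
      case False
      have eq: "(\<lambda>p. gg x2s i j (fst p) (snd p)) = (\<lambda>p. B2 (fst p) (x2s (snd i)) (snd p) (x2s (snd j)))"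
        using False by (simp add: gg_def)
      show ?thesis unfolding eq by (rule B2_meas[OF a1 _ a2]) simp_all
    qed
    then show ?thesis by (simp only: case_prod_beta')
  qed
  obtain x1s where x1s: "\<forall>s\<in>I1. x1s s \<in> space (K (x2s (snd s))) \<and> Pw (x1s s) (x2s (snd s))"
    and le: "(\<Sum>s\<in>I1. A (x1s s) (x2s (snd s))) + (\<Sum>s\<in>I1. \<Sum>t\<in>I1-{s}. gg x2s s t (x1s s) (x1s t))
      \<le> (\<Sum>s\<in>I1. \<integral>\<^sup>+ x. A x (x2s (snd s)) \<partial>K (x2s (snd s)))
       + (\<Sum>s\<in>I1. \<Sum>t\<in>I1-{s}. \<integral>\<^sup>+ x. \<integral>\<^sup>+ y. gg x2s s t x y \<partial>K (x2s (snd t)) \<partial>K (x2s (snd s)))"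
    using select_slots[where I=I1 and \<mu>="\<lambda>s. K (x2s (snd s))" and G="\<lambda>s x. Pw x (x2s (snd s))"
        and f="\<lambda>s x. A x (x2s (snd s))" and g="gg x2s", OF fin K_prob good fm gm]
    unfolding I1_def by auto
  have e1: "(\<Sum>s\<in>I1. \<integral>\<^sup>+ x. A x (x2s (snd s)) \<partial>K (x2s (snd s))) = (\<Sum>s\<in>I1. \<alpha> (x2s (snd s)))"
    unfolding \<alpha>_def ..
  have e2: "(\<Sum>s\<in>I1. \<Sum>t\<in>I1-{s}. \<integral>\<^sup>+ x. \<integral>\<^sup>+ y. gg x2s s t x y \<partial>K (x2s (snd t)) \<partial>K (x2s (snd s)))
     = (\<Sum>s\<in>I1. \<Sum>t\<in>I1-{s}. if snd s = snd t then \<delta> (x2s (snd s)) else \<beta> (x2s (snd s)) (x2s (snd t)))"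
    by (intro sum.cong refl) (auto simp: gg_def \<delta>_def \<beta>_def)
  have e3: "(\<Sum>s\<in>I1. \<alpha> (x2s (snd s))) + (\<Sum>s\<in>I1. \<Sum>t\<in>I1-{s}. if snd s = snd t then \<delta> (x2s (snd s)) else \<beta> (x2s (snd s)) (x2s (snd t)))
     = (\<Sum>m2<M2. F1 (x2s m2)) + (\<Sum>m2<M2. \<Sum>m2'\<in>{..<M2}-{m2}. G1 (x2s m2) (x2s m2'))"
    unfolding I1_def F1_def G1_def
    by (rule sum_identity[where a="\<lambda>m2. \<alpha> (x2s m2)" and d="\<lambda>m2. \<delta> (x2s m2)" and b="\<lambda>m2 m2'. \<beta> (x2s m2) (x2s m2')"])
  show ?thesis
    using x1s le unfolding e1 e2 e3 by blast
qed

lemma stage1: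
  fixes Pw :: "real^'n \<Rightarrow> real^'n \<Rightarrow> bool"
  assumes goodP: "AE x2 in PX2. AE x1 in K x2. Pw x1 x2"
  shows "\<exists>x2s. (\<forall>m2<M2. AE x1 in K (x2s m2). Pw x1 (x2s m2)) \<and>
    (\<Sum>m2<M2. F1 (x2s m2)) + (\<Sum>m2<M2. \<Sum>m2'\<in>{..<M2}-{m2}. G1 (x2s m2) (x2s m2'))
     \<le> of_nat M1 * of_nat M2 * (emeasure (joint_XY P) FG + \<Lambda>1 * cc + \<Lambda>12 * cc)"
proof -
  interpret PX2: prob_space PX2 by (rule PX2_prob)
  have Fm: "F1 \<in> borel_measurable PX2"
    unfolding F1_def[abs_def] by (intro borel_measurable_add borel_measurable_sum alpha_meas delta_meas)
  have bm: "(\<lambda>p. \<beta> (fst p) (snd p)) \<in> borel_measurable (PX2 \<Otimes>\<^sub>M PX2)"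
    using beta_meas by (simp only: case_prod_beta')
  have Gm: "(\<lambda>(x, y). G1 x y) \<in> borel_measurable (PX2 \<Otimes>\<^sub>M PX2)"
  proof -
    have "(\<lambda>p. G1 (fst p) (snd p)) \<in> borel_measurable (PX2 \<Otimes>\<^sub>M PX2)"
      unfolding G1_def by (intro borel_measurable_sum bm)
    then show ?thesis by (simp only: case_prod_beta')
  qed
  obtain x2s where x2s: "\<forall>m2\<in>{..<M2}. x2s m2 \<in> space PX2 \<and> (AE x1 in K (x2s m2). Pw x1 (x2s m2))"
    and le: "(\<Sum>m2<M2. F1 (x2s m2)) + (\<Sum>m2<M2. \<Sum>m2'\<in>{..<M2}-{m2}. G1 (x2s m2) (x2s m2'))
      \<le> (\<Sum>m2<M2. \<integral>\<^sup>+ x. F1 x \<partial>PX2) + (\<Sum>m2<M2. \<Sum>m2'\<in>{..<M2}-{m2}. \<integral>\<^sup>+ x. \<integral>\<^sup>+ y. G1 x y \<partial>PX2 \<partial>PX2)"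
    using select_slots[where I="{..<M2}" and \<mu>="\<lambda>_. PX2" and G="\<lambda>_ x2. AE x1 in K x2. Pw x1 x2"
        and f="\<lambda>_. F1" and g="\<lambda>_ _. G1", OF _ PX2_prob goodP Fm Gm] by auto
  define pr where "pr = emeasure (joint_XY P) FG"
  define D where "D = (\<integral>\<^sup>+ x. \<delta> x \<partial>PX2)"
  define Bt where "Bt = (\<integral>\<^sup>+ x. \<integral>\<^sup>+ y. \<beta> x y \<partial>PX2 \<partial>PX2)"
  have card1: "\<And>m1. m1 \<in> {..<M1} \<Longrightarrow> card ({..<M1} - {m1}) = M1 - 1" by simp
  have intF: "(\<integral>\<^sup>+ x. F1 x \<partial>PX2) = of_nat M1 * pr + of_nat M1 * (of_nat (M1 - 1) * D)"
  proof -
    have F1c: "F1 x = of_nat M1 * \<alpha> x + of_nat M1 * (of_nat (M1 - 1) * \<delta> x)" for x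
      unfolding F1_def by (simp add: card1)
    have m1: "(\<lambda>x. of_nat M1 * \<alpha> x) \<in> borel_measurable PX2"
      by (intro borel_measurable_times_ennreal alpha_meas measurable_const) simp
    have m2: "(\<lambda>x. of_nat M1 * (of_nat (M1 - 1) * \<delta> x)) \<in> borel_measurable PX2"
      by (intro borel_measurable_times_ennreal delta_meas measurable_const) simp_all
    have "(\<integral>\<^sup>+ x. F1 x \<partial>PX2) = (\<integral>\<^sup>+ x. of_nat M1 * \<alpha> x \<partial>PX2) + (\<integral>\<^sup>+ x. of_nat M1 * (of_nat (M1 - 1) * \<delta> x) \<partial>PX2)"
      unfolding F1c by (rule nn_integral_add[OF m1 m2])
    also have "\<dots> = of_nat M1 * pr + of_nat M1 * (of_nat (M1 - 1) * D)"
      unfolding pr_def D_def alpha_joint[symmetric]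
      by (simp add: nn_integral_cmult alpha_meas delta_meas borel_measurable_times_ennreal)
    finally show ?thesis .
  qed
  have intG: "(\<integral>\<^sup>+ x. \<integral>\<^sup>+ y. G1 x y \<partial>PX2 \<partial>PX2) = of_nat M1 * (of_nat M1 * Bt)"
  proof -
    have bm1: "(\<lambda>y. \<beta> x y) \<in> borel_measurable PX2" for x
      using measurable_Pair2[OF beta_meas, of x] by simp
    have bm2: "(\<lambda>x. \<integral>\<^sup>+ y. \<beta> x y \<partial>PX2) \<in> borel_measurable PX2"
      by (rule PX2.borel_measurable_nn_integral[OF beta_meas])
    have G1c: "G1 x y = of_nat M1 * (of_nat M1 * \<beta> x y)" for x y
      unfolding G1_def by simp
    have inner: "(\<integral>\<^sup>+ y. G1 x y \<partial>PX2) = of_nat M1 * (of_nat M1 * (\<integral>\<^sup>+ y. \<beta> x y \<partial>PX2))" for x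
    proof -
      have m: "(\<lambda>y. of_nat M1 * \<beta> x y) \<in> borel_measurable PX2"
        by (intro borel_measurable_times_ennreal bm1 measurable_const) simp
      show ?thesis unfolding G1c
        by (simp only: nn_integral_cmult[OF m] nn_integral_cmult[OF bm1])
    qed
    have m2: "(\<lambda>x. of_nat M1 * (\<integral>\<^sup>+ y. \<beta> x y \<partial>PX2)) \<in> borel_measurable PX2"
      by (intro borel_measurable_times_ennreal bm2 measurable_const) simp
    show ?thesis unfolding inner Bt_def
      by (simp only: nn_integral_cmult[OF m2] nn_integral_cmult[OF bm2])
  qed
  have hD: "of_nat M1 * D \<le> \<Lambda>1 * cc"
  proof -
    have "of_nat M1 * D = (\<integral>\<^sup>+ x. ennreal (real M1) * \<delta> x \<partial>PX2)"
      unfolding D_def by (subst nn_integral_cmult) (simp_all add: delta_meas ennreal_of_nat_eq_real_of_nat)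
    also have "\<dots> \<le> (\<integral>\<^sup>+ x. \<Lambda>1 * cc \<partial>PX2)"
      by (intro nn_integral_mono) (simp add: \<delta>_def delta_bound)
    also have "\<dots> = \<Lambda>1 * cc"
    proof -
      have "emeasure PX2 UNIV = 1" using PX2.emeasure_space_1 by simp
      then show ?thesis by simp
    qed
    finally show ?thesis .
  qed
  have hB: "of_nat M1 * of_nat M2 * Bt \<le> \<Lambda>12 * cc"
    using beta_bound0 unfolding Bt_def beta_eq
    by (simp add: ennreal_of_nat_eq_real_of_nat ennreal_mult)
  have "(\<Sum>m2<M2. \<integral>\<^sup>+ x. F1 x \<partial>PX2) + (\<Sum>m2<M2. \<Sum>m2'\<in>{..<M2}-{m2}. \<integral>\<^sup>+ x. \<integral>\<^sup>+ y. G1 x y \<partial>PX2 \<partial>PX2)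
     = of_nat M2 * (of_nat M1 * pr + of_nat M1 * (of_nat (M1 - 1) * D)) + of_nat M2 * (of_nat (M2 - 1) * (of_nat M1 * (of_nat M1 * Bt)))"
    unfolding intF intG by simp
  also have "\<dots> \<le> of_nat M1 * of_nat M2 * (pr + \<Lambda>1 * cc + \<Lambda>12 * cc)"
    by (rule arith_bound[OF hD hB])
  finally show ?thesis using x2s le unfolding pr_def by (intro exI[of _ x2s]) auto
qed

end


context mac
begin

lemma code_exists:
  fixes S1 S2 :: real
  assumes P_power: "AE x in P. (norm (fst x))\<^sup>2 \<le> real CARD('n) * S1 \<and> (norm (snd x))\<^sup>2 \<le> real CARD('n) * S2"
  shows "\<exists>(f1 :: nat \<Rightarrow> nat \<Rightarrow> real^'n) (f2 :: nat \<Rightarrow> real^'n) (dec :: real^'n \<Rightarrow> nat \<times> nat) eps.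
    is_code M1 M2 S1 S2 eps f1 f2 dec \<and>
    ennreal eps \<le> ennreal (measure (joint_XY P) FG) + \<Lambda>1 * cc + \<Lambda>12 * cc"
proof -
  define Pw where "Pw x1 x2 \<longleftrightarrow> (norm x1)\<^sup>2 \<le> real CARD('n) * S1 \<and> (norm x2)\<^sup>2 \<le> real CARD('n) * S2"
    for x1 x2 :: "real^'n"
  have pwm: "Measurable.pred borel (\<lambda>p::(real^'n) \<times> (real^'n). (norm (fst p))\<^sup>2 \<le> real CARD('n) * S1 \<and> (norm (snd p))\<^sup>2 \<le> real CARD('n) * S2)"
  proof -
    have c1: "(\<lambda>p::(real^'n) \<times> (real^'n). (norm (fst p))\<^sup>2) \<in> borel_measurable borel"
      by (intro borel_measurable_continuous_onI continuous_intros)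
    have c2: "(\<lambda>p::(real^'n) \<times> (real^'n). (norm (snd p))\<^sup>2) \<in> borel_measurable borel"
      by (intro borel_measurable_continuous_onI continuous_intros)
    have "{p::(real^'n) \<times> (real^'n) \<in> space borel. (norm (fst p))\<^sup>2 \<le> real CARD('n) * S1} \<in> sets borel"
      by (rule borel_measurable_le[OF c1]) simp
    moreover have "{p::(real^'n) \<times> (real^'n) \<in> space borel. (norm (snd p))\<^sup>2 \<le> real CARD('n) * S2} \<in> sets borel"
      by (rule borel_measurable_le[OF c2]) simp
    ultimately have "{p::(real^'n) \<times> (real^'n) \<in> space borel. (norm (fst p))\<^sup>2 \<le> real CARD('n) * S1}
      \<inter> {p::(real^'n) \<times> (real^'n) \<in> space borel. (norm (snd p))\<^sup>2 \<le> real CARD('n) * S2} \<in> sets borel"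
      by (rule sets.Int)
    moreover have "{p::(real^'n) \<times> (real^'n) \<in> space borel. (norm (fst p))\<^sup>2 \<le> real CARD('n) * S1 \<and> (norm (snd p))\<^sup>2 \<le> real CARD('n) * S2}
      = {p::(real^'n) \<times> (real^'n) \<in> space borel. (norm (fst p))\<^sup>2 \<le> real CARD('n) * S1}
      \<inter> {p::(real^'n) \<times> (real^'n) \<in> space borel. (norm (snd p))\<^sup>2 \<le> real CARD('n) * S2}" by blast
    ultimately show ?thesis unfolding pred_def by argo
  qed
  have goodP: "AE x2 in PX2. AE x1 in K x2. Pw x1 x2"
    using P_AE[OF P_power pwm] unfolding Pw_def by simp
  obtain x2s where x2s: "\<forall>m2<M2. AE x1 in K (x2s m2). Pw x1 (x2s m2)"
    and c1: "(\<Sum>m2<M2. F1 (x2s m2)) + (\<Sum>m2<M2. \<Sum>m2'\<in>{..<M2}-{m2}. G1 (x2s m2) (x2s m2'))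
     \<le> of_nat M1 * of_nat M2 * (emeasure (joint_XY P) FG + \<Lambda>1 * cc + \<Lambda>12 * cc)"
    using stage1[OF goodP] by blast
  obtain x1s where x1s: "\<forall>s\<in>I1. Pw (x1s s) (x2s (snd s))"
    and c2: "(\<Sum>s\<in>I1. A (x1s s) (x2s (snd s))) + (\<Sum>s\<in>I1. \<Sum>t\<in>I1-{s}. gg x2s s t (x1s s) (x1s t))
   \<le> (\<Sum>m2<M2. F1 (x2s m2)) + (\<Sum>m2<M2. \<Sum>m2'\<in>{..<M2}-{m2}. G1 (x2s m2) (x2s m2'))"
    using stage2[where x2s=x2s and Pw=Pw] x2s by blast
  have finI: "finite I1" unfolding I1_def by simp
  have d0: "(0, 0) \<in> I1" unfolding I1_def using M1_pos M2_pos by simp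
  define dec where "dec = (\<lambda>y. if \<exists>!t. t \<in> I1 \<and> pa x1s x2s t y then THE t. t \<in> I1 \<and> pa x1s x2s t y else (0, 0))"
  have dec_meas: "dec \<in> measurable borel (count_space UNIV)"
    unfolding dec_def by (rule decoder(1)[OF finI d0 pa_meas])
  have dec_in: "\<And>y. dec y \<in> I1"
    unfolding dec_def by (rule decoder(2)[OF finI d0 pa_meas])
  have dec_err: "\<And>s y. s \<in> I1 \<Longrightarrow> dec y \<noteq> s \<Longrightarrow> \<not> pa x1s x2s s y \<or> (\<exists>t\<in>I1-{s}. pa x1s x2s t y)"
    unfolding dec_def by (rule decoder(3)[OF finI d0 pa_meas])
  define f1 where "f1 m1 m2 = x1s (m1, m2)" for m1 m2
  define f2 where "f2 = x2s"
  define err where "err s = measure (chan (x1s s) (x2s (snd s))) {y. dec y \<noteq> s}" for s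
  define eps where "eps = (1 / (real M1 * real M2)) * (\<Sum>m1<M1. \<Sum>m2<M2. measure (chan (f1 m1 m2) (f2 m2)) {y. dec y \<noteq> (m1, m2)})"
  have eps_eq: "eps = (1 / (real M1 * real M2)) * (\<Sum>s\<in>I1. err s)"
    unfolding eps_def err_def I1_def f1_def f2_def by (simp add: sum.cartesian_product')
  have code: "is_code M1 M2 S1 S2 eps f1 f2 dec"
    unfolding is_code_def
  proof (intro conjI allI impI)
    fix m1 m2 assume "m1 < M1" "m2 < M2"
    then have "(m1, m2) \<in> I1" unfolding I1_def by simp
    then show "(norm (f1 m1 m2))\<^sup>2 \<le> real CARD('n) * S1" using x1s unfolding f1_def Pw_def by auto
  next
    fix m2 assume "m2 < M2"
    then have "(0, m2) \<in> I1" unfolding I1_def using M1_pos by simp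
    then show "(norm (f2 m2))\<^sup>2 \<le> real CARD('n) * S2" using x1s unfolding f2_def Pw_def by auto
  next
    fix y show "dec y \<in> {..<M1} \<times> {..<M2}" using dec_in unfolding I1_def by simp
  next
    show "dec \<in> measurable borel (count_space UNIV)" by (rule dec_meas)
  next
    show "1 / (real M1 * real M2) * (\<Sum>m1<M1. \<Sum>m2<M2. measure (chan (f1 m1 m2) (f2 m2)) {y. dec y \<noteq> (m1, m2)}) \<le> eps"
      unfolding eps_def ..
  qed
  have err_le: "ennreal (err s) \<le> A (x1s s) (x2s (snd s)) + (\<Sum>t\<in>I1-{s}. gg x2s s t (x1s s) (x1s t))" if s: "s \<in> I1" for s
  proof -
    interpret ch: prob_space "chan (x1s s) (x2s (snd s))" by (rule prob_chan)
    have "ennreal (err s) = emeasure (chan (x1s s) (x2s (snd s))) {y. dec y \<noteq> s}"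
      unfolding err_def by (simp add: ch.emeasure_eq_measure)
    also have "\<dots> \<le> A (x1s s) (x2s (snd s)) + (\<Sum>t\<in>I1-{s}. gg x2s s t (x1s s) (x1s t))"
      by (rule msg_bound[OF s]) (rule dec_err[OF s])
    finally show ?thesis .
  qed
  have pos: "real M1 * real M2 > 0" using M1_pos M2_pos by simp
  have "ennreal eps = ennreal (1 / (real M1 * real M2)) * (\<Sum>s\<in>I1. ennreal (err s))"
  proof -
    have nn: "0 \<le> (\<Sum>s\<in>I1. err s)" by (intro sum_nonneg) (simp add: err_def)
    have "ennreal eps = ennreal (1 / (real M1 * real M2)) * ennreal (\<Sum>s\<in>I1. err s)"
      unfolding eps_eq by (rule ennreal_mult) (use pos nn in auto)
    also have "ennreal (\<Sum>s\<in>I1. err s) = (\<Sum>s\<in>I1. ennreal (err s))"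
      by (rule sum_ennreal[symmetric]) (simp add: err_def)
    finally show ?thesis .
  qed
  also have "\<dots> \<le> ennreal (1 / (real M1 * real M2)) * ((\<Sum>s\<in>I1. A (x1s s) (x2s (snd s))) + (\<Sum>s\<in>I1. \<Sum>t\<in>I1-{s}. gg x2s s t (x1s s) (x1s t)))"
    by (intro mult_left_mono) (simp_all add: sum.distrib[symmetric] sum_mono err_le)
  also have "\<dots> \<le> ennreal (1 / (real M1 * real M2)) * (of_nat M1 * of_nat M2 * (emeasure (joint_XY P) FG + \<Lambda>1 * cc + \<Lambda>12 * cc))"
    by (intro mult_left_mono order.trans[OF c2 c1]) simp
  also have "\<dots> = emeasure (joint_XY P) FG + \<Lambda>1 * cc + \<Lambda>12 * cc"
  proof -
    have "ennreal (1 / (real M1 * real M2)) * (of_nat M1 * of_nat M2) = 1"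
      using pos M1_pos M2_pos by (simp add: ennreal_of_nat_eq_real_of_nat ennreal_mult[symmetric] del: ennreal_1)
    then show ?thesis by (simp add: mult.assoc[symmetric])
  qed
  also have "emeasure (joint_XY P) FG = ennreal (measure (joint_XY P) FG)"
  proof -
    interpret J: prob_space "joint_XY P" by (rule joint_prob)
    show ?thesis by (rule J.emeasure_eq_measure)
  qed
  finally show ?thesis using code by blast
qed

end


lemma trivial_code:
  fixes S1 S2 :: real and M1 M2 :: nat
  assumes M1_pos: "M1 > 0" and M2_pos: "M2 > 0" and S1: "S1 \<ge> 0" and S2: "S2 \<ge> 0"
  shows "is_code M1 M2 S1 S2 1 (\<lambda>_ _. 0 :: real^'n) (\<lambda>_. 0) (\<lambda>_. (0, 0))"
  unfolding is_code_def
proof (intro conjI allI impI)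
  show "(\<lambda>_. (0, 0)) \<in> measurable borel (count_space UNIV)" by simp
next
  have "(\<Sum>m1<M1. \<Sum>m2<M2. measure (chan (0::real^'n) 0) {y. (0::nat, 0::nat) \<noteq> (m1, m2)}) \<le> (\<Sum>m1<M1. \<Sum>m2<M2. 1)"
  proof (intro sum_mono)
    fix m1 m2
    interpret prob_space "chan (0::real^'n) 0" by (rule prob_chan)
    show "measure (chan (0::real^'n) 0) {y. (0::nat, 0::nat) \<noteq> (m1, m2)} \<le> 1" by (rule prob_le_1)
  qed
  also have "\<dots> = real M1 * real M2" by simp
  finally have "(\<Sum>m1<M1. \<Sum>m2<M2. measure (chan (0::real^'n) 0) {y. (0::nat, 0::nat) \<noteq> (m1, m2)}) \<le> real M1 * real M2" .
  moreover have pos: "real M1 * real M2 > 0" using M1_pos M2_pos by simp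
  ultimately have "1 / (real M1 * real M2) * (\<Sum>m1<M1. \<Sum>m2<M2. measure (chan (0::real^'n) 0) {y. (0, 0) \<noteq> (m1, m2)})
     \<le> 1 / (real M1 * real M2) * (real M1 * real M2)"
    by (intro mult_left_mono) simp_all
  also have "\<dots> = 1" using pos M1_pos M2_pos by simp
  finally show "1 / (real M1 * real M2) * (\<Sum>m1<M1. \<Sum>m2<M2. measure (chan (0::real^'n) 0) {y. (0, 0) \<noteq> (m1, m2)}) \<le> 1" .
next
  fix m1 m2 :: nat
  show "(norm (0::real^'n))\<^sup>2 \<le> real CARD('n) * S1" using S1 by simp
next
  fix m2 :: nat
  show "(norm (0::real^'n))\<^sup>2 \<le> real CARD('n) * S2" using S2 by simp
next
  fix y :: "real^'n"
  show "(0::nat, 0::nat) \<in> {..<M1} \<times> {..<M2}" using M1_pos M2_pos by simp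
qed

lemma nn_pos:
  assumes "prob_space M" and "f \<in> borel_measurable M" and "\<And>x. f x > 0"
  shows "(\<integral>\<^sup>+ x. ennreal (f x) \<partial>M) \<noteq> 0"
proof
  interpret prob_space M by fact
  assume "(\<integral>\<^sup>+ x. ennreal (f x) \<partial>M) = 0"
  moreover have m: "(\<lambda>x. ennreal (f x)) \<in> borel_measurable M"
    by (rule measurable_compose[OF assms(2) measurable_ennreal])
  ultimately have "AE x in M. ennreal (f x) = 0"
    using nn_integral_0_iff_AE[OF m] by blast
  then have "AE x in M. False" by (rule eventually_mono) (use assms(3) in \<open>simp add: less_le\<close>)
  then show False using AE_False by simp
qed

lemma Wn_pos_g: "Wn y x1 x2 > 0"
  unfolding Wn_def by (intro prod_pos) (simp add: W_pos)

lemma div0_top: "(a::ennreal) \<noteq> 0 \<Longrightarrow> a / ennreal 0 = top"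
  by (simp add: ennreal_divide_eq_top_iff)

theorem proposition4:
  fixes P :: "((real^'n) \<times> (real^'n)) measure"
    and PX1X2 :: "real^'n \<Rightarrow> (real^'n) measure"
    and QYX2 :: "real^'n \<Rightarrow> real^'n \<Rightarrow> real"
    and QY :: "real^'n \<Rightarrow> real"
    and M1 M2 :: nat and S1 S2 \<gamma> :: real
  assumes M1_pos: "M1 > 0" and M2_pos: "M2 > 0"
    and P_prob: "prob_space P" and P_sets: "sets P = sets borel"
    and P_power: "AE x in P. (norm (fst x))\<^sup>2 \<le> real CARD('n) * S1 \<and> (norm (snd x))\<^sup>2 \<le> real CARD('n) * S2"
    and K_meas: "PX1X2 \<in> measurable borel (subprob_algebra borel)"
    and K_prob: "\<And>x2. prob_space (PX1X2 x2)"
    and K_disint: "P = distr P borel snd \<bind> (\<lambda>x2. distr (PX1X2 x2) borel (\<lambda>x1. (x1, x2)))"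
    and QYX2_nonneg: "\<And>y x2. QYX2 y x2 \<ge> 0"
    and QYX2_meas: "(\<lambda>(y, x2). QYX2 y x2) \<in> borel_measurable borel"
    and QYX2_dens: "\<And>x2. (\<integral>\<^sup>+ y. ennreal (QYX2 y x2) \<partial>lborel) = 1"
    and QY_nonneg: "\<And>y. QY y \<ge> 0"
    and QY_meas: "QY \<in> borel_measurable borel"
    and QY_dens: "(\<integral>\<^sup>+ y. ennreal (QY y) \<partial>lborel) = 1"
    and \<gamma>_pos: "\<gamma> > 0"
  shows "\<exists>(f1 :: nat \<Rightarrow> nat \<Rightarrow> real^'n) (f2 :: nat \<Rightarrow> real^'n) (dec :: real^'n \<Rightarrow> nat \<times> nat) eps. is_code M1 M2 S1 S2 eps f1 f2 dec \<and>
    ennreal eps \<le>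
      ennreal (measure (joint_XY P)
        {((x1, x2), y).
           (1 / real CARD('n)) * ln (Wn y x1 x2 / QYX2 y x2)
              \<le> (1 / real CARD('n)) * ln (real M1) + \<gamma>
         \<or> (1 / real CARD('n)) * ln (Wn y x1 x2 / QY y)
              \<le> (1 / real CARD('n)) * ln (real M1 * real M2) + \<gamma>})
      + (SUP x2. SUP y. (\<integral>\<^sup>+ x1. ennreal (Wn y x1 x2) \<partial>PX1X2 x2) / ennreal (QYX2 y x2))
          * ennreal (exp (- real CARD('n) * \<gamma>))
      + (SUP y. (\<integral>\<^sup>+ x. ennreal (Wn y (fst x) (snd x)) \<partial>P) / ennreal (QY y))
          * ennreal (exp (- real CARD('n) * \<gamma>))"


proof -
  have n: "real CARD('n) > 0" by simp
  define e where "e = ennreal (exp (- real CARD('n) * \<gamma>))"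
  have e0: "e \<noteq> 0" unfolding e_def by simp
  show ?thesis
  proof (cases "(\<forall>y x2. QYX2 y x2 > 0) \<and> (\<forall>y. QY y > 0)")
    case True
    interpret mac P PX1X2 QYX2 QY M1 M2 \<gamma>
      by (rule mac.intro[OF M1_pos M2_pos P_prob P_sets K_meas K_prob K_disint _ QYX2_meas _ QY_meas \<gamma>_pos])
         (use True in blast)+
    show ?thesis
      using code_exists[OF P_power] unfolding FG_def \<Lambda>1_def \<Lambda>12_def cc_def .
  next
    case False
    interpret Pp: prob_space P by (rule P_prob)
    have "\<exists>x::(real^'n) \<times> (real^'n). (norm (fst x))\<^sup>2 \<le> real CARD('n) * S1 \<and> (norm (snd x))\<^sup>2 \<le> real CARD('n) * S2"
    proof (rule ccontr)
      assume nex: "\<not> ?thesis"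
      have "AE x in P. False" using P_power by (rule eventually_mono) (use nex in blast)
      then show False by simp
    qed
    then obtain x0 :: "(real^'n) \<times> (real^'n)" where x0: "(norm (fst x0))\<^sup>2 \<le> real CARD('n) * S1" "(norm (snd x0))\<^sup>2 \<le> real CARD('n) * S2" by blast
    have S1: "S1 \<ge> 0"
    proof -
      have "0 \<le> real CARD('n) * S1" using x0(1) by (rule order.trans[rotated]) simp
      then show ?thesis using n by (simp add: zero_le_mult_iff)
    qed
    have S2: "S2 \<ge> 0"
    proof -
      have "0 \<le> real CARD('n) * S2" using x0(2) by (rule order.trans[rotated]) simp
      then show ?thesis using n by (simp add: zero_le_mult_iff)
    qed
    define L1 where "L1 = (SUP x2. SUP y. (\<integral>\<^sup>+ x1. ennreal (Wn y x1 x2) \<partial>PX1X2 x2) / ennreal (QYX2 y x2))"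
    define L2 where "L2 = (SUP y. (\<integral>\<^sup>+ x. ennreal (Wn y (fst x) (snd x)) \<partial>P) / ennreal (QY y))"
    have top: "L1 = top \<or> L2 = top"
    proof (cases "\<forall>y x2. QYX2 y x2 > 0")
      case True
      with False obtain y0 where y0: "\<not> QY y0 > 0" by blast
      then have q0: "QY y0 = 0" using QY_nonneg[of y0] by simp
      have Wm: "(\<lambda>x. Wn y0 (fst x) (snd x)) \<in> borel_measurable P"
        by (rule Wn_meas) (simp_all add: measurable_cong_sets[OF P_sets refl] fst_borel snd_borel)
      have "(\<integral>\<^sup>+ x. ennreal (Wn y0 (fst x) (snd x)) \<partial>P) \<noteq> 0"
        by (rule nn_pos[OF P_prob Wm]) (rule Wn_pos_g)
      then have "(\<integral>\<^sup>+ x. ennreal (Wn y0 (fst x) (snd x)) \<partial>P) / ennreal (QY y0) = top"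
        unfolding q0 by (rule div0_top)
      moreover have "(\<integral>\<^sup>+ x. ennreal (Wn y0 (fst x) (snd x)) \<partial>P) / ennreal (QY y0) \<le> L2"
        unfolding L2_def by (rule SUP_upper) simp
      ultimately show ?thesis by (simp add: top_unique)
    next
      case False
      then obtain y0 x20 where y0: "\<not> QYX2 y0 x20 > 0" by blast
      then have q0: "QYX2 y0 x20 = 0" using QYX2_nonneg[of y0 x20] by simp
      have sK: "sets (PX1X2 x20) = sets borel"
        using measurable_space[OF K_meas, of x20] by (simp add: space_subprob_algebra)
      have Wm: "(\<lambda>x1. Wn y0 x1 x20) \<in> borel_measurable (PX1X2 x20)"
        by (rule Wn_meas) (simp_all add: measurable_cong_sets[OF sK refl])
      have "(\<integral>\<^sup>+ x1. ennreal (Wn y0 x1 x20) \<partial>PX1X2 x20) \<noteq> 0"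
        by (rule nn_pos[OF K_prob Wm]) (rule Wn_pos_g)
      then have "(\<integral>\<^sup>+ x1. ennreal (Wn y0 x1 x20) \<partial>PX1X2 x20) / ennreal (QYX2 y0 x20) = top"
        unfolding q0 by (rule div0_top)
      moreover have "(\<integral>\<^sup>+ x1. ennreal (Wn y0 x1 x20) \<partial>PX1X2 x20) / ennreal (QYX2 y0 x20) \<le> L1"
        unfolding L1_def by (intro SUP_upper2[of x20] SUP_upper) simp_all
      ultimately show ?thesis by (simp add: top_unique)
    qed
    have tops: "X + L1 * e + L2 * e = top" for X
      using top e0 by (auto simp: ennreal_top_mult)
    have rhs: "ennreal 1 \<le> X + L1 * e + L2 * e" for X
      unfolding tops[of X] by (rule top_greatest)
    show ?thesis
      using trivial_code[OF M1_pos M2_pos S1 S2] rhs unfolding L1_def L2_def e_def by blast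
  qed
qed


end
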